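(* Let $A$ be a $3\times 3$ skew-symmetric integer matrix which is mutation-cyclic, and let $g\in\mathbb{Z}^3$ be a nonzero vector with $Ag=0$. Write the output of the algorithm described in the context as $m(A)=S(-a,-b,c)$ and suppose $c>2$. Then the graded cluster algebra $\mathcal{A}((x_1,x_2,x_3),A,g)$ has only finitely many cluster variables of each occurring degree. Moreover, the grading is not balanced.
   Context: Notation: for integers $p,q,r$, $S(p,q,r)$ denotes the skew-symmetric matrix $\begin{pmatrix}0&-p&-r\\ p&0&-q\\ r&q&0\end{pmatrix}$. Matrix mutation: for a $3\times3$ skew-symmetric integer matrix $B=(b_{ij})$ and $k\in\{1,2,3\}$, $\mu_k(B)=(b'_{ij})$ with $b'_{ij}=-b_{ij}$ if $i=k$ or $j=k$, and $b'_{ij}=b_{ij}+\operatorname{sgn}(b_{ik})\max(b_{ik}b_{kj},0)$ otherwise. The mutation class of $B$ is the set of matrices obtained from $B$ by finite sequences of mutations. A $3\times 3$ skew-symmetric matrix is acyclic if its associated quiver (with $b_{ij}$ arrows $i\to j$ when $b_{ij}>0$) has no oriented cycle, equivalently if some column has all its nonzero entries of the same sign; otherwise it is cyclic. $A$ is mutation-cyclic if every matrix in its mutation class is cyclic. Essential equivalence: $B$ and $C$ are essentially equivalent if there is a permutation $\sigma$ of $\{1,2,3\}$ with $C_{ij}=B_{\sigma(i)\sigma(j)}$ for all $i,j$, or $C_{ij}=-B_{\sigma(i)\sigma(j)}$ for all $i,j$ (overall sign is disregarded). The standard form of $B$ is the first matrix in the list $S(-a,-b,c),\,S(-a,b,c),\,S(a,-b,c),\,S(a,b,c)$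 (with $a\ge b\ge c\ge 0$) that is essentially equivalent to $B$. Algorithm defining $m(A)$: replace the input by its standard form and write it $S(-a,-b,c)$ with $|a|\ge|b|\ge|c|\ge 0$; set $A_1$ equal to it. Step 1: if $a\ge b\ge c\ge 2$ and $bc-a\ge b$, the input passes; otherwise, if some column is sign-coherent or $c\le 2$, it fails. Step 2 (for the current $A_i$): if some matrix essentially equivalent to $\mu_3(A_i)$ has the form $S(-d,-e,f)$ with $d\ge e\ge f\ge 2$, let $A_{i+1}$ be such a matrix; otherwise fail. Then: if $f\ge 3$ and $ef-d\ge e$, pass; if $f=2$, pass if $d=e$ and fail if $d>e$; otherwise increase $i$ and repeat Step 2. Output: if the input passed with the most recently computed matrix $S(-d,-e,f)$ (for the pass in Step 1 this is $S(-a,-b,c)$) satisfying $ef-d\ge d$, then $m(A)$ is that matrix; if it passed with $ef-d<d$, then $m(A)$ is $\mu_3$ of that matrix; if it failed, continue computing $A_i$ in the same way until an acyclic $A_k$ is reached and set $m(A)=A_k$. Graded cluster algebras: a seed $((x_1,x_2,x_3),B)$ mutates in direction $k$ to $(x',\mu_k B)$ with $x'_j=x_j$ ($j\ne k$) and $x'_k=\big(\prod_{b_{ik}>0}x_i^{b_{ik}}+\prod_{b_{ik}<0}x_i^{-b_{ik}}\big)/x_k$. Cluster variables are all entries of clusters reachable by iterated mutation, and $\mathcal{A}(x,B,g)$ is the algebra they generate, graded by $\deg x_i=g_i$ where $Bg=0$; under mutation at $k$ the degree vector becomes $g'$ with $g'_j=g_j$ ($j\neq k$) and $g'_k=-g_k+\sum_{b_{ik}>0}b_{ik}g_i$,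 and every cluster variable is homogeneous. A degree occurs if some cluster variable has that degree. The grading is balanced if for every $d$ there is a bijection between the cluster variables of degree $d$ and those of degree $-d$. *)

theory Defs
  imports Complex_Main
begin

text \<open>3x3 integer matrices, indexed by 1,2,3 (entries outside are 0).\<close>
type_synonym mat3 = "nat \<Rightarrow> nat \<Rightarrow> int"

definition I3 :: "nat set" where "I3 = {1,2,3}"

definition skew3 :: "mat3 \<Rightarrow> bool" where
  "skew3 B \<longleftrightarrow> (\<forall>i j. B i j = - B j i) \<and> (\<forall>i j. i \<notin> I3 \<or> j \<notin> I3 \<longrightarrow> B i j = 0)"

definition S :: "int \<Rightarrow> int \<Rightarrow> int \<Rightarrow> mat3" where
  "S p q r = (\<lambda>i j.
     if i = 1 \<and> j = 2 then -p else if i = 1 \<and> j = 3 then -r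
     else if i = 2 \<and> j = 1 then p else if i = 2 \<and> j = 3 then -q
     else if i = 3 \<and> j = 1 then r else if i = 3 \<and> j = 2 then q else 0)"

definition negm :: "mat3 \<Rightarrow> mat3" where
  "negm B = (\<lambda>i j. - B i j)"

definition mut :: "nat \<Rightarrow> mat3 \<Rightarrow> mat3" where
  "mut k B = (\<lambda>i j. if i \<notin> I3 \<or> j \<notin> I3 then 0
      else if i = k \<or> j = k then - B i j
      else B i j + sgn (B i k) * max (B i k * B k j) 0)"

inductive mut_class :: "mat3 \<Rightarrow> mat3 \<Rightarrow> bool" for A :: mat3 where
  refl: "mut_class A A"
| step: "mut_class A B \<Longrightarrow> k \<in> I3 \<Longrightarrow> mut_class A (mut k B)"

definition acyclic3 :: "mat3 \<Rightarrow> bool" where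
  "acyclic3 B \<longleftrightarrow> (\<exists>j\<in>I3. (\<forall>i\<in>I3. B i j \<ge> 0) \<or> (\<forall>i\<in>I3. B i j \<le> 0))"

definition mutation_cyclic :: "mat3 \<Rightarrow> bool" where
  "mutation_cyclic A \<longleftrightarrow> (\<forall>B. mut_class A B \<longrightarrow> \<not> acyclic3 B)"

definition ess_equiv :: "mat3 \<Rightarrow> mat3 \<Rightarrow> bool" where
  "ess_equiv B C \<longleftrightarrow> (\<exists>\<sigma>. bij_betw \<sigma> I3 I3 \<and>
     ((\<forall>i\<in>I3. \<forall>j\<in>I3. C i j = B (\<sigma> i) (\<sigma> j)) \<or>
      (\<forall>i\<in>I3. \<forall>j\<in>I3. C i j = - B (\<sigma> i) (\<sigma> j))))"

definition std_form :: "mat3 \<Rightarrow> mat3" where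
  "std_form B = (let l = sort [\<bar>B 1 2\<bar>, \<bar>B 1 3\<bar>, \<bar>B 2 3\<bar>];
                     a = l ! 2; b = l ! 1; c = l ! 0 in
     if ess_equiv B (S (-a) (-b) c) then S (-a) (-b) c
     else if ess_equiv B (S (-a) b c) then S (-a) b c
     else if ess_equiv B (S a (-b) c) then S a (-b) c
     else S a b c)"

text \<open>Output of a pass with most recent matrix S(-d,-e,f).\<close>
definition out_of :: "int \<Rightarrow> int \<Rightarrow> int \<Rightarrow> mat3" where
  "out_of d e f = (if e * f - d \<ge> d then S (-d) (-e) f else mut 3 (S (-d) (-e) f))"

text \<open>Continuation after failure: keep computing A_i (each an essentially
  equivalent form of mu_3 of the previous one) until an acyclic one is reached.\<close>
inductive fail_run :: "mat3 \<Rightarrow> mat3 \<Rightarrow> bool" where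
  stop: "acyclic3 B \<Longrightarrow> fail_run B B"
| go: "\<not> acyclic3 B \<Longrightarrow> ess_equiv (mut 3 B) C \<Longrightarrow> fail_run C M \<Longrightarrow> fail_run B M"

text \<open>Step 2 iteration from the current matrix A_i, terminating with output M.\<close>
inductive run2 :: "mat3 \<Rightarrow> mat3 \<Rightarrow> bool" where
  pass: "\<lbrakk>ess_equiv (mut 3 B) (S (-d) (-e) f); d \<ge> e; e \<ge> f; f \<ge> 2;
          (f \<ge> 3 \<and> e * f - d \<ge> e) \<or> (f = 2 \<and> d = e)\<rbrakk> \<Longrightarrow> run2 B (out_of d e f)"
| cont: "\<lbrakk>ess_equiv (mut 3 B) (S (-d) (-e) f); d \<ge> e; e \<ge> f; f \<ge> 3;
          e * f - d < e; run2 (S (-d) (-e) f) M\<rbrakk> \<Longrightarrow> run2 B M"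
| fail_f2: "\<lbrakk>ess_equiv (mut 3 B) (S (-d) (-e) f); d \<ge> e; e \<ge> f; f = 2; d > e;
          fail_run (S (-d) (-e) f) M\<rbrakk> \<Longrightarrow> run2 B M"
| fail_nf: "\<lbrakk>\<not> (\<exists>d e f. ess_equiv (mut 3 B) (S (-d) (-e) f) \<and> d \<ge> e \<and> e \<ge> f \<and> f \<ge> 2);
          fail_run B M\<rbrakk> \<Longrightarrow> run2 B M"

text \<open>m_out A M: the algorithm on input A terminates with m(A) = M.
  The standard form A_1 is written S(-a,-b,c), i.e. a = -A_1(2,1), b = -A_1(3,2), c = A_1(3,1).\<close>
definition m_out :: "mat3 \<Rightarrow> mat3 \<Rightarrow> bool" where
  "m_out A M \<longleftrightarrow> (let A1 = std_form A; a = - A1 2 1; b = - A1 3 2; c = A1 3 1 in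
     if a \<ge> b \<and> b \<ge> c \<and> c \<ge> 2 \<and> b * c - a \<ge> b then M = out_of a b c
     else if acyclic3 A1 \<or> c \<le> 2 then fail_run A1 M
     else run2 A1 M)"

text \<open>Cluster variables are subtraction-free rational functions in x1,x2,x3; we represent
  each by the function it induces on the positive orthant (and 0 elsewhere).  Two rational
  functions are equal iff they agree on the positive orthant.\<close>
type_synonym cvar = "(nat \<Rightarrow> real) \<Rightarrow> real"

definition pos3 :: "(nat \<Rightarrow> real) \<Rightarrow> bool" where
  "pos3 p \<longleftrightarrow> (\<forall>i\<in>I3. p i > 0)"

definition x0 :: "nat \<Rightarrow> cvar" where
  "x0 i = (\<lambda>p. if pos3 p then p i else 0)"

definition mut_cluster :: "nat \<Rightarrow> mat3 \<Rightarrow> (nat \<Rightarrow> cvar) \<Rightarrow> (nat \<Rightarrow> cvar)" where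
  "mut_cluster k B x = x(k := (\<lambda>p. if pos3 p then
      ((\<Prod>i\<in>{i\<in>I3. B i k > 0}. x i p ^ nat (B i k)) +
       (\<Prod>i\<in>{i\<in>I3. B i k < 0}. x i p ^ nat (- B i k))) / x k p
      else 0))"

definition mut_deg :: "nat \<Rightarrow> mat3 \<Rightarrow> (nat \<Rightarrow> int) \<Rightarrow> (nat \<Rightarrow> int)" where
  "mut_deg k B h = h(k := - h k + (\<Sum>i\<in>{i\<in>I3. B i k > 0}. B i k * h i))"

inductive seed_reach :: "mat3 \<Rightarrow> (nat \<Rightarrow> int) \<Rightarrow> (nat \<Rightarrow> cvar) \<Rightarrow> mat3 \<Rightarrow> (nat \<Rightarrow> int) \<Rightarrow> bool"
  for A :: mat3 and g :: "nat \<Rightarrow> int" where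
  init: "seed_reach A g x0 A g"
| step: "seed_reach A g x B h \<Longrightarrow> k \<in> I3 \<Longrightarrow>
         seed_reach A g (mut_cluster k B x) (mut k B) (mut_deg k B h)"

definition cvars_deg :: "mat3 \<Rightarrow> (nat \<Rightarrow> int) \<Rightarrow> int \<Rightarrow> cvar set" where
  "cvars_deg A g d = {v. \<exists>x B h i. seed_reach A g x B h \<and> i \<in> I3 \<and> v = x i \<and> h i = d}"

definition balanced :: "mat3 \<Rightarrow> (nat \<Rightarrow> int) \<Rightarrow> bool" where
  "balanced A g \<longleftrightarrow> (\<forall>d. \<exists>f. bij_betw f (cvars_deg A g d) (cvars_deg A g (- d)))"

end

theory Submission
  imports Defs
begin


lemma S_ent[simp]: "S p q r 2 1 = p" "S p q r 3 2 = q" "S p q r 3 1 = r"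
  "S p q r 1 2 = -p" "S p q r 2 3 = -q" "S p q r 1 3 = -r"
  "S p q r 1 1 = 0" "S p q r 2 2 = 0" "S p q r 3 3 = 0"
  unfolding S_def by auto

lemmas S_ent1[simp] = S_ent[unfolded One_nat_def]

lemma S_out: "i \<notin> I3 \<or> j \<notin> I3 \<Longrightarrow> S p q r i j = 0"
  unfolding S_def I3_def by auto

lemma I3_cases: "i \<in> I3 \<Longrightarrow> i = 1 \<or> i = 2 \<or> i = 3" unfolding I3_def by auto

lemma S_skew: "skew3 (S p q r)"
  unfolding skew3_def
proof (intro conjI allI impI)
  fix i j show "S p q r i j = - S p q r j i"
  proof (cases "i \<in> I3 \<and> j \<in> I3")
    case True
    then have "i = 1 \<or> i = 2 \<or> i = 3" "j = 1 \<or> j = 2 \<or> j = 3" using I3_cases by auto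
    then show ?thesis by (elim disjE) simp_all
  qed (auto simp: S_out)
next
  fix i j show "i \<notin> I3 \<or> j \<notin> I3 \<Longrightarrow> S p q r i j = 0" by (rule S_out)
qed


lemma skew_S: assumes "skew3 B" shows "B = S (B 2 1) (B 3 2) (B 3 1)"
proof (rule ext)+
  fix i j
  have sk: "\<And>i j. B i j = - B j i" and out: "\<And>i j. i \<notin> I3 \<or> j \<notin> I3 \<Longrightarrow> B i j = 0"
    using assms unfolding skew3_def by blast+
  have d: "\<And>i. B i i = 0" using sk by (metis add.inverse_neutral neg_equal_zero)
  show "B i j = S (B 2 1) (B 3 2) (B 3 1) i j"
  proof (cases "i \<in> I3 \<and> j \<in> I3")
    case True
    then show ?thesis using I3_cases[of i] I3_cases[of j] d sk[of 1 2] sk[of 2 3] sk[of 1 3]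
      by (auto simp: S_def)
  next
    case False
    then show ?thesis using out S_out by auto
  qed
qed


lemma mut_out: "i \<notin> I3 \<or> j \<notin> I3 \<Longrightarrow> mut k B i j = 0"
  unfolding mut_def by auto

lemma mat_eqI:
  assumes "\<And>i j. i \<notin> I3 \<or> j \<notin> I3 \<Longrightarrow> M i j = 0"
    and "\<And>i j. i \<notin> I3 \<or> j \<notin> I3 \<Longrightarrow> N i j = 0"
    and "M 1 1 = N 1 1" "M 1 2 = N 1 2" "M 1 3 = N 1 3"
    and "M 2 1 = N 2 1" "M 2 2 = N 2 2" "M 2 3 = N 2 3"
    and "M 3 1 = N 3 1" "M 3 2 = N 3 2" "M 3 3 = N 3 3"
  shows "M = N"
proof (rule ext)+
  fix i j show "M i j = N i j"
  proof (cases "i \<in> I3 \<and> j \<in> I3")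
    case True
    then have "i = 1 \<or> i = 2 \<or> i = 3" "j = 1 \<or> j = 2 \<or> j = 3" using I3_cases by auto
    then show ?thesis using assms(3-11) by (elim disjE) simp_all
  qed (use assms in auto)
qed

lemma mut_S_ent: "mut k (S p q r) i j = (if i \<notin> I3 \<or> j \<notin> I3 then 0
      else if i = k \<or> j = k then - S p q r i j
      else S p q r i j + sgn (S p q r i k) * max (S p q r i k * S p q r k j) 0)"
  unfolding mut_def by simp

lemma I3_mem[simp]: "1 \<in> I3" "2 \<in> I3" "3 \<in> I3" unfolding I3_def by auto

lemma sgn_aux: "max (- (q * r)) 0 = 0 \<or> sgn q = - sgn (r::int)"
  by (cases "q > 0"; cases "q < 0"; cases "r > 0"; cases "r < 0") (auto simp: mult_pos_pos mult_neg_neg)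

lemma sgn_aux2: "max (p * q) 0 = 0 \<or> sgn q = sgn (p::int)"
  by (cases "q > 0"; cases "q < 0"; cases "p > 0"; cases "p < 0") (auto simp: mult_pos_neg mult_neg_pos)

lemma mut3_S: "mut 3 (S p q r) = S (p - sgn q * max (- q * r) 0) (-q) (-r)"
  apply (rule mat_eqI)
  apply (simp_all only: mut_out S_out mut_S_ent I3_mem S_ent)
  apply (simp_all add: algebra_simps)
  using sgn_aux[of q r] by auto

lemma mut1_S: "mut 1 (S p q r) = S (-p) (q + sgn r * max (- r * p) 0) (-r)"
  apply (rule mat_eqI)
  apply (simp_all only: mut_out S_out mut_S_ent I3_mem S_ent)
  apply (simp_all add: algebra_simps)
  using sgn_aux[of p r] by auto

lemma mut2_S: "mut 2 (S p q r) = S (-p) (-q) (r + sgn q * max (q * p) 0)"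
  apply (rule mat_eqI)
  apply (simp_all only: mut_out S_out mut_S_ent I3_mem S_ent)
  apply (simp_all add: algebra_simps)
  using sgn_aux2[of p q] by auto

lemma acyc_S: "acyclic3 (S p q r) \<longleftrightarrow> \<not> ((p > 0 \<and> q > 0 \<and> r < 0) \<or> (p < 0 \<and> q < 0 \<and> r > 0))"
  unfolding acyclic3_def I3_def by (simp add: S_ent) linarith


definition cyc :: "int \<Rightarrow> int \<Rightarrow> int \<Rightarrow> int \<Rightarrow> mat3" where
  "cyc e a b c = S (-e*a) (-e*b) (e*c)"

definition wt :: "mat3 \<Rightarrow> nat \<Rightarrow> int" where
  "wt B k = (if k = 1 then \<bar>B 3 2\<bar> else if k = 2 then \<bar>B 3 1\<bar> else \<bar>B 2 1\<bar>)"

definition opw :: "mat3 \<Rightarrow> nat \<Rightarrow> int" where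
  "opw B k = (if k = 1 then wt B 2 * wt B 3 else if k = 2 then wt B 1 * wt B 3 else wt B 1 * wt B 2)"

definition Cm :: "mat3 \<Rightarrow> int" where
  "Cm B = wt B 1 ^ 2 + wt B 2 ^ 2 + wt B 3 ^ 2 - wt B 1 * wt B 2 * wt B 3"

lemma cyc_form:
  assumes "skew3 B" "\<not> acyclic3 B"
  shows "\<exists>e a b c. (e = 1 \<or> e = -1) \<and> a > 0 \<and> b > 0 \<and> c > 0 \<and> B = cyc e a b c"
proof -
  have B: "B = S (B 2 1) (B 3 2) (B 3 1)" using skew_S assms(1) by blast
  define p q r where "p = B 2 1" "q = B 3 2" "r = B 3 1"
  have Bs: "B = S p q r" using B p_q_r_def by simp
  have "(p > 0 \<and> q > 0 \<and> r < 0) \<or> (p < 0 \<and> q < 0 \<and> r > 0)"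
    using assms(2) acyc_S Bs by metis
  then show ?thesis
  proof
    assume h: "p > 0 \<and> q > 0 \<and> r < 0"
    show ?thesis
      by (rule exI[of _ "-1"], rule exI[of _ p], rule exI[of _ q], rule exI[of _ "-r"])
         (use h Bs in \<open>simp add: cyc_def\<close>)
  next
    assume h: "p < 0 \<and> q < 0 \<and> r > 0"
    show ?thesis
      by (rule exI[of _ "1"], rule exI[of _ "-p"], rule exI[of _ "-q"], rule exI[of _ "r"])
         (use h Bs in \<open>simp add: cyc_def\<close>)
  qed
qed

lemma wt_cyc: "e = 1 \<or> e = -1 \<Longrightarrow> a > 0 \<Longrightarrow> b > 0 \<Longrightarrow> c > 0 \<Longrightarrow>
   wt (cyc e a b c) 1 = b \<and> wt (cyc e a b c) 2 = c \<and> wt (cyc e a b c) 3 = a"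
  unfolding wt_def cyc_def by (auto simp: abs_mult)

lemma acyc_cyc: "e = 1 \<or> e = -1 \<Longrightarrow> b > 0 \<Longrightarrow> c > 0 \<Longrightarrow>
   \<not> acyclic3 (cyc e a b c) \<longleftrightarrow> a > 0"
  unfolding cyc_def acyc_S by (auto simp: zero_less_mult_iff mult_less_0_iff)

lemma acyc_cyc1: "e = 1 \<or> e = -1 \<Longrightarrow> a > 0 \<Longrightarrow> c > 0 \<Longrightarrow>
   \<not> acyclic3 (cyc e a b c) \<longleftrightarrow> b > 0"
  unfolding cyc_def acyc_S by (auto simp: zero_less_mult_iff mult_less_0_iff)

lemma acyc_cyc2: "e = 1 \<or> e = -1 \<Longrightarrow> a > 0 \<Longrightarrow> b > 0 \<Longrightarrow>
   \<not> acyclic3 (cyc e a b c) \<longleftrightarrow> c > 0"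
  unfolding cyc_def acyc_S by (auto simp: zero_less_mult_iff mult_less_0_iff)

lemma mut3_cyc: "e = 1 \<or> e = -1 \<Longrightarrow> a > 0 \<Longrightarrow> b > 0 \<Longrightarrow> c > 0 \<Longrightarrow>
   mut 3 (cyc e a b c) = cyc (-e) (b*c - a) b c"
  unfolding cyc_def mut3_S by (elim disjE) (simp_all add: algebra_simps mult_pos_pos)

lemma mut1_cyc: "e = 1 \<or> e = -1 \<Longrightarrow> a > 0 \<Longrightarrow> b > 0 \<Longrightarrow> c > 0 \<Longrightarrow>
   mut 1 (cyc e a b c) = cyc (-e) a (a*c - b) c"
  unfolding cyc_def mut1_S by (elim disjE) (simp_all add: algebra_simps mult_pos_pos)

lemma mut2_cyc: "e = 1 \<or> e = -1 \<Longrightarrow> a > 0 \<Longrightarrow> b > 0 \<Longrightarrow> c > 0 \<Longrightarrow>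
   mut 2 (cyc e a b c) = cyc (-e) a b (a*b - c)"
  unfolding cyc_def mut2_S by (elim disjE) (simp_all add: algebra_simps mult_pos_pos)

lemma skew_cyc: "skew3 (cyc e a b c)" unfolding cyc_def by (rule S_skew)



lemma wt_pos: assumes "skew3 B" "\<not> acyclic3 B" shows "wt B k > 0"
proof -
  obtain e a b c where e: "e = 1 \<or> e = -1" and pos: "a > 0" "b > 0" "c > 0" and B: "B = cyc e a b c"
    using cyc_form assms(1,2) by blast
  have w: "wt B 1 = b" "wt B 2 = c" "wt B 3 = a" using wt_cyc[OF e pos] B by auto
  have "wt B k = wt B 1 \<or> wt B k = wt B 2 \<or> wt B k = wt B 3" unfolding wt_def by auto
  then show ?thesis using w pos by auto
qed

lemma ge3:
  fixes a b c :: int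
  assumes "a > 0" "b > 0" "c > 0" "a^2 + b^2 + c^2 - a*b*c \<le> 0"
  shows "a \<ge> 3"
proof (rule ccontr)
  assume "\<not> a \<ge> 3"
  then have "a \<le> 2" by simp
  have "a*b*c \<le> 2*b*c" using \<open>a \<le> 2\<close> assms by (simp add: mult_right_mono)
  moreover have "(b - c)^2 \<ge> 0" by simp
  moreover have "(b-c)^2 = b^2 + c^2 - 2*b*c" by (simp add: power2_eq_square algebra_simps)
  moreover have "a^2 > 0" using assms by simp
  ultimately show False using assms(4) by linarith
qed

lemma mut_invol:
  assumes "\<And>i j. i \<notin> I3 \<or> j \<notin> I3 \<Longrightarrow> B i j = 0"
  shows "mut k (mut k B) = B"
proof (rule ext)+
  fix i j
  show "mut k (mut k B) i j = B i j"
  proof (cases "i \<notin> I3 \<or> j \<notin> I3")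
    case True then show ?thesis using assms by (simp add: mut_def)
  next
    case False
    then show ?thesis
    proof (cases "i = k \<or> j = k")
      case True then show ?thesis using False by (simp add: mut_def)
    next
      case F2: False
      have "k \<in> I3 \<or> k \<notin> I3" by simp
      then show ?thesis
      proof
        assume "k \<notin> I3" then show ?thesis using False F2 assms[of i k] by (simp add: mut_def)
      next
        assume k: "k \<in> I3"
        have "mut k B i k = - B i k" "mut k B k j = - B k j" using False k by (simp_all add: mut_def)
        moreover have "mut k B i j = B i j + sgn (B i k) * max (B i k * B k j) 0" using False F2 by (simp add: mut_def)
        ultimately show ?thesis using False F2 by (simp add: mut_def sgn_minus)
      qed
    qed
  qed
qed



lemma cyc_mut_wt:
  assumes "skew3 B" "\<not> acyclic3 B" "k \<in> I3" "\<not> acyclic3 (mut k B)"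
  shows "skew3 (mut k B) \<and> wt (mut k B) k = opw B k - wt B k \<and>
         (\<forall>j\<in>I3. j \<noteq> k \<longrightarrow> wt (mut k B) j = wt B j)"
proof -
  obtain e a b c where e: "e = 1 \<or> e = -1" and pos: "a > 0" "b > 0" "c > 0" and B: "B = cyc e a b c"
    using cyc_form assms(1,2) by blast
  have w: "wt B 1 = b" "wt B 2 = c" "wt B 3 = a" using wt_cyc[OF e pos] B by auto
  have e': "-e = 1 \<or> -e = -1" using e by auto
  consider "k = 1" | "k = 2" | "k = 3" using I3_cases assms(3) by blast
  then show ?thesis
  proof cases
    case 1
    have M: "mut k B = cyc (-e) a (a*c - b) c" using mut1_cyc[OF e pos] B 1 by simp
    have p: "a*c - b > 0" using assms(4) M acyc_cyc1[OF e' pos(1) pos(3)] by simp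
    show ?thesis using wt_cyc[OF e' pos(1) p pos(3)] M w 1 skew_cyc
      unfolding opw_def I3_def by (auto simp: wt_def)
  next
    case 2
    have M: "mut k B = cyc (-e) a b (a*b - c)" using mut2_cyc[OF e pos] B 2 by simp
    have p: "a*b - c > 0" using assms(4) M acyc_cyc2[OF e' pos(1) pos(2)] by simp
    show ?thesis using wt_cyc[OF e' pos(1) pos(2) p] M w 2 skew_cyc
      unfolding opw_def I3_def by (auto simp: wt_def)
  next
    case 3
    have M: "mut k B = cyc (-e) (b*c - a) b c" using mut3_cyc[OF e pos] B 3 by simp
    have p: "b*c - a > 0" using assms(4) M acyc_cyc[OF e' pos(2) pos(3)] by simp
    show ?thesis using wt_cyc[OF e' p pos(2) pos(3)] M w 3 skew_cyc
      unfolding opw_def I3_def by (auto simp: wt_def mult.commute)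
  qed
qed



lemma vieta1: "((y::int)*z - w)^2 + y^2 + z^2 - (y*z - w)*y*z = w^2 + y^2 + z^2 - w*y*z"
  by (simp add: power2_eq_square algebra_simps)
lemma vieta2: "(y::int)^2 + (y*z - w)^2 + z^2 - y*(y*z - w)*z = y^2 + w^2 + z^2 - y*w*z"
  by (simp add: power2_eq_square algebra_simps)
lemma vieta3: "(y::int)^2 + z^2 + (y*z - w)^2 - y*z*(y*z - w) = y^2 + z^2 + w^2 - y*z*w"
  by (simp add: power2_eq_square algebra_simps)

lemma Cm_mut:
  assumes "k \<in> I3" "wt M k = opw B k - wt B k" "\<forall>j\<in>I3. j \<noteq> k \<longrightarrow> wt M j = wt B j"
  shows "Cm M = Cm B"
proof -
  have o1: "wt M 1 = wt B 1" if "k \<noteq> 1" using assms(3) that by (simp add: I3_def)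
  have o2: "wt M 2 = wt B 2" if "k \<noteq> 2" using assms(3) that by (simp add: I3_def)
  have o3: "wt M 3 = wt B 3" if "k \<noteq> 3" using assms(3) that by (simp add: I3_def)
  consider "k = 1" | "k = 2" | "k = 3" using I3_cases assms(1) by blast
  then show ?thesis
  proof cases
    case 1
    then have e: "wt M 1 = wt B 2 * wt B 3 - wt B 1" using assms(2) by (simp add: opw_def)
    show ?thesis unfolding Cm_def by (simp only: e o2 o3 1 vieta1)
  next
    case 2
    then have e: "wt M 2 = wt B 1 * wt B 3 - wt B 2" using assms(2) by (simp add: opw_def)
    show ?thesis unfolding Cm_def by (simp only: e o1 o3 2 vieta2)
  next
    case 3
    then have e: "wt M 3 = wt B 1 * wt B 2 - wt B 3" using assms(2) by (simp add: opw_def)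
    show ?thesis unfolding Cm_def by (simp only: e o1 o2 3 vieta3)
  qed
qed


lemma class_inv:
  assumes "mut_class A B" "skew3 A" "mutation_cyclic A"
  shows "skew3 B \<and> \<not> acyclic3 B \<and> Cm B = Cm A"
  using assms
proof (induction rule: mut_class.induct)
  case refl
  then show ?case using assms unfolding mutation_cyclic_def by (auto intro: mut_class.refl)
next
  case (step B k)
  have na: "\<not> acyclic3 (mut k B)" using step assms(3) mut_class.step unfolding mutation_cyclic_def by blast
  have "skew3 (mut k B) \<and> wt (mut k B) k = opw B k - wt B k \<and> (\<forall>j\<in>I3. j \<noteq> k \<longrightarrow> wt (mut k B) j = wt B j)"
    using cyc_mut_wt step na by blast
  then show ?case using Cm_mut[of k "mut k B" B] step na by auto
qed



lemma ess_alt: "ess_equiv B C \<longleftrightarrow> (\<exists>\<sigma> s. bij_betw \<sigma> I3 I3 \<and> (s = 1 \<or> s = -1) \<and>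
    (\<forall>i\<in>I3. \<forall>j\<in>I3. C i j = s * B (\<sigma> i) (\<sigma> j)))"
  unfolding ess_equiv_def
proof
  assume "\<exists>\<sigma>. bij_betw \<sigma> I3 I3 \<and> ((\<forall>i\<in>I3. \<forall>j\<in>I3. C i j = B (\<sigma> i) (\<sigma> j)) \<or> (\<forall>i\<in>I3. \<forall>j\<in>I3. C i j = - B (\<sigma> i) (\<sigma> j)))"
  then obtain \<sigma> where b: "bij_betw \<sigma> I3 I3" and h: "(\<forall>i\<in>I3. \<forall>j\<in>I3. C i j = B (\<sigma> i) (\<sigma> j)) \<or> (\<forall>i\<in>I3. \<forall>j\<in>I3. C i j = - B (\<sigma> i) (\<sigma> j))" by blast
  from h show "\<exists>\<sigma> s. bij_betw \<sigma> I3 I3 \<and> (s = 1 \<or> s = -1) \<and> (\<forall>i\<in>I3. \<forall>j\<in>I3. C i j = s * B (\<sigma> i) (\<sigma> j))"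
  proof
    assume "\<forall>i\<in>I3. \<forall>j\<in>I3. C i j = B (\<sigma> i) (\<sigma> j)"
    then show ?thesis using b by (intro exI[of _ \<sigma>] exI[of _ 1]) auto
  next
    assume "\<forall>i\<in>I3. \<forall>j\<in>I3. C i j = - B (\<sigma> i) (\<sigma> j)"
    then show ?thesis using b by (intro exI[of _ \<sigma>] exI[of _ "-1"]) auto
  qed
next
  assume "\<exists>\<sigma> s. bij_betw \<sigma> I3 I3 \<and> (s = 1 \<or> s = -1) \<and> (\<forall>i\<in>I3. \<forall>j\<in>I3. C i j = s * B (\<sigma> i) (\<sigma> j))"
  then obtain \<sigma> s where "bij_betw \<sigma> I3 I3" "s = 1 \<or> s = -1" "\<forall>i\<in>I3. \<forall>j\<in>I3. C i j = s * B (\<sigma> i) (\<sigma> j)" by blast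
  then show "\<exists>\<sigma>. bij_betw \<sigma> I3 I3 \<and> ((\<forall>i\<in>I3. \<forall>j\<in>I3. C i j = B (\<sigma> i) (\<sigma> j)) \<or> (\<forall>i\<in>I3. \<forall>j\<in>I3. C i j = - B (\<sigma> i) (\<sigma> j)))"
    by (intro exI[of _ \<sigma>]) auto
qed



lemma ess_trans: assumes "ess_equiv B C" "ess_equiv C D" shows "ess_equiv B D"
proof -
  obtain \<sigma> s where s: "bij_betw \<sigma> I3 I3" "s = 1 \<or> s = -1" "\<forall>i\<in>I3. \<forall>j\<in>I3. C i j = s * B (\<sigma> i) (\<sigma> j)"
    using assms(1) unfolding ess_alt by blast
  obtain \<tau> t where t: "bij_betw \<tau> I3 I3" "t = 1 \<or> t = -1" "\<forall>i\<in>I3. \<forall>j\<in>I3. D i j = t * C (\<tau> i) (\<tau> j)"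
    using assms(2) unfolding ess_alt by blast
  have b: "bij_betw (\<sigma> \<circ> \<tau>) I3 I3" using s(1) t(1) bij_betw_trans by blast
  have tm: "\<tau> i \<in> I3" if "i \<in> I3" for i using t(1) that bij_betwE by blast
  have "\<forall>i\<in>I3. \<forall>j\<in>I3. D i j = (t*s) * B ((\<sigma> \<circ> \<tau>) i) ((\<sigma> \<circ> \<tau>) j)"
    using t(3) s(3) tm by simp
  moreover have "t*s = 1 \<or> t*s = -1" using s(2) t(2) by auto
  ultimately show ?thesis unfolding ess_alt using b by blast
qed


lemma ess_refl: "ess_equiv B B"
  unfolding ess_alt by (rule exI[of _ id], rule exI[of _ 1]) (simp add: bij_betw_id)

lemma ess_neg: "ess_equiv B (negm B)"
  unfolding ess_alt by (rule exI[of _ id], rule exI[of _ "-1"]) (simp add: bij_betw_id negm_def)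

lemma sgn_mult_pm: "s = 1 \<or> s = -1 \<Longrightarrow> sgn (s * x) = s * sgn (x::int)"
  by (elim disjE) (simp_all add: sgn_minus)


lemma ess_mut:
  assumes "ess_equiv B C" "k \<in> I3" shows "\<exists>k'\<in>I3. ess_equiv (mut k' B) (mut k C)"
proof -
  obtain \<sigma> s where s: "bij_betw \<sigma> I3 I3" "s = 1 \<or> s = -1" "\<forall>i\<in>I3. \<forall>j\<in>I3. C i j = s * B (\<sigma> i) (\<sigma> j)"
    using assms(1) unfolding ess_alt by blast
  have k: "k \<in> I3" by fact
  have sm: "\<sigma> i \<in> I3" if "i \<in> I3" for i using s(1) that bij_betwE by blast
  have inj: "\<sigma> i = \<sigma> j \<longleftrightarrow> i = j" if "i \<in> I3" "j \<in> I3" for i j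
    using s(1) that unfolding bij_betw_def inj_on_def by blast
  have ss: "s * s = 1" using s(2) by auto
  have "\<forall>i\<in>I3. \<forall>j\<in>I3. mut k C i j = s * mut (\<sigma> k) B (\<sigma> i) (\<sigma> j)"
  proof (intro ballI)
    fix i j assume i: "i \<in> I3" and j: "j \<in> I3"
    have e1: "C i j = s * B (\<sigma> i) (\<sigma> j)" "C i k = s * B (\<sigma> i) (\<sigma> k)" "C k j = s * B (\<sigma> k) (\<sigma> j)"
      using s(3) i j k by auto
    have pr: "C i k * C k j = B (\<sigma> i) (\<sigma> k) * B (\<sigma> k) (\<sigma> j)"
      unfolding e1 using s(2) by (elim disjE) simp_all
    have sg: "sgn (C i k) = s * sgn (B (\<sigma> i) (\<sigma> k))" unfolding e1 by (rule sgn_mult_pm[OF s(2)])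
    have m1: "mut k C i j = (if i = k \<or> j = k then - C i j else C i j + sgn (C i k) * max (C i k * C k j) 0)"
      unfolding mut_def using i j by simp
    have m2: "mut (\<sigma> k) B (\<sigma> i) (\<sigma> j) = (if i = k \<or> j = k then - B (\<sigma> i) (\<sigma> j) else
        B (\<sigma> i) (\<sigma> j) + sgn (B (\<sigma> i) (\<sigma> k)) * max (B (\<sigma> i) (\<sigma> k) * B (\<sigma> k) (\<sigma> j)) 0)"
      unfolding mut_def using i j k sm inj[OF i k] inj[OF j k] by simp
    show "mut k C i j = s * mut (\<sigma> k) B (\<sigma> i) (\<sigma> j)"
      unfolding m1 m2 pr sg e1(1) by (cases "i = k \<or> j = k") (simp_all add: ring_distribs)
  qed
  then have "ess_equiv (mut (\<sigma> k) B) (mut k C)" unfolding ess_alt using s(1,2) by blast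
  then show ?thesis using sm k by blast
qed


lemma ess_acyc: assumes "ess_equiv B C" "acyclic3 C" shows "acyclic3 B"
proof -
  obtain \<sigma> s where s: "bij_betw \<sigma> I3 I3" "s = 1 \<or> s = -1" "\<forall>i\<in>I3. \<forall>j\<in>I3. C i j = s * B (\<sigma> i) (\<sigma> j)"
    using assms(1) unfolding ess_alt by blast
  obtain j where j: "j \<in> I3" and c: "(\<forall>i\<in>I3. C i j \<ge> 0) \<or> (\<forall>i\<in>I3. C i j \<le> 0)"
    using assms(2) unfolding acyclic3_def by blast
  have sj: "\<sigma> j \<in> I3" using s(1) j bij_betwE by blast
  have surj: "\<exists>i\<in>I3. i' = \<sigma> i" if "i' \<in> I3" for i'
    using s(1) that unfolding bij_betw_def by auto
  have "(\<forall>i'\<in>I3. B i' (\<sigma> j) \<ge> 0) \<or> (\<forall>i'\<in>I3. B i' (\<sigma> j) \<le> 0)"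
  proof -
    have key: "\<forall>i\<in>I3. C i j = s * B (\<sigma> i) (\<sigma> j)" using s(3) j by blast
    from s(2) c show ?thesis
    proof (elim disjE)
      assume "s = 1" "\<forall>i\<in>I3. C i j \<ge> 0" then show ?thesis using key surj by fastforce
    next
      assume "s = 1" "\<forall>i\<in>I3. C i j \<le> 0" then show ?thesis using key surj by fastforce
    next
      assume "s = -1" "\<forall>i\<in>I3. C i j \<ge> 0" then show ?thesis using key surj by fastforce
    next
      assume "s = -1" "\<forall>i\<in>I3. C i j \<le> 0" then show ?thesis using key surj by fastforce
    qed
  qed
  then show ?thesis unfolding acyclic3_def using sj by blast
qed

definition Cabs :: "mat3 \<Rightarrow> int" where
  "Cabs B = \<bar>B 1 2\<bar>^2 + \<bar>B 1 3\<bar>^2 + \<bar>B 2 3\<bar>^2 - \<bar>B 1 2\<bar> * \<bar>B 1 3\<bar> * \<bar>B 2 3\<bar>"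

lemma Cabs_Cm: "skew3 B \<Longrightarrow> Cabs B = Cm B"
proof -
  assume "skew3 B"
  then have "B 3 2 = - B 2 3" "B 3 1 = - B 1 3" "B 2 1 = - B 1 2" unfolding skew3_def by blast+
  then show ?thesis unfolding Cabs_def Cm_def wt_def by (simp add: algebra_simps)
qed

lemma perm3:
  assumes "x \<in> I3" "y \<in> I3" "z \<in> I3" "x \<noteq> y" "x \<noteq> z" "y \<noteq> z"
  shows "(x = 1 \<and> y = 2 \<and> z = 3) \<or> (x = 1 \<and> y = 3 \<and> z = 2) \<or> (x = 2 \<and> y = 1 \<and> z = 3) \<or>
         (x = 2 \<and> y = 3 \<and> z = 1) \<or> (x = 3 \<and> y = 1 \<and> z = 2) \<or> (x = 3 \<and> y = 2 \<and> z = 1)"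
  using assms unfolding I3_def by auto

lemma ess_Cabs: assumes "ess_equiv B C" "skew3 B" shows "Cabs C = Cabs B"
proof -
  obtain \<sigma> s where s: "bij_betw \<sigma> I3 I3" "s = 1 \<or> s = -1" "\<forall>i\<in>I3. \<forall>j\<in>I3. C i j = s * B (\<sigma> i) (\<sigma> j)"
    using assms(1) unfolding ess_alt by blast
  have ab: "\<bar>C i j\<bar> = \<bar>B (\<sigma> i) (\<sigma> j)\<bar>" if "i \<in> I3" "j \<in> I3" for i j
    using s(2,3) that by (auto simp: abs_mult)
  have sk: "\<bar>B i j\<bar> = \<bar>B j i\<bar>" for i j using assms(2) unfolding skew3_def by (metis abs_minus_cancel)
  have sm: "\<sigma> i \<in> I3" if "i \<in> I3" for i using s(1) that bij_betwE by blast
  have inj: "\<sigma> i \<noteq> \<sigma> j" if "i \<in> I3" "j \<in> I3" "i \<noteq> j" for i j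
    using s(1) that unfolding bij_betw_def inj_on_def by blast
  have c12: "\<bar>C 1 2\<bar> = \<bar>B (\<sigma> 1) (\<sigma> 2)\<bar>" "\<bar>C 1 3\<bar> = \<bar>B (\<sigma> 1) (\<sigma> 3)\<bar>" "\<bar>C 2 3\<bar> = \<bar>B (\<sigma> 2) (\<sigma> 3)\<bar>"
    using ab by (auto simp: I3_def)
  have d: "\<sigma> 1 \<in> I3" "\<sigma> 2 \<in> I3" "\<sigma> 3 \<in> I3" "\<sigma> 1 \<noteq> \<sigma> 2" "\<sigma> 1 \<noteq> \<sigma> 3" "\<sigma> 2 \<noteq> \<sigma> 3"
    using sm inj by (auto simp: I3_def)
  define u v w where "u = \<bar>B 1 2\<bar>" "v = \<bar>B 1 3\<bar>" "w = \<bar>B 2 3\<bar>"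
  have sk2: "\<bar>B 2 1\<bar> = u" "\<bar>B 3 1\<bar> = v" "\<bar>B 3 2\<bar> = w" using sk u_v_w_def by auto
  have CB: "Cabs B = u^2 + v^2 + w^2 - u*v*w" unfolding Cabs_def u_v_w_def by simp
  define c1 c2 c3 where "c1 = \<bar>C 1 2\<bar>" "c2 = \<bar>C 1 3\<bar>" "c3 = \<bar>C 2 3\<bar>"
  have CC: "Cabs C = c1^2 + c2^2 + c3^2 - c1*c2*c3" unfolding Cabs_def c1_c2_c3_def by simp
  have uvw: "\<bar>B 1 2\<bar> = u" "\<bar>B 1 3\<bar> = v" "\<bar>B 2 3\<bar> = w" using u_v_w_def by auto
  note all = uvw sk2 uvw[unfolded One_nat_def] sk2[unfolded One_nat_def]
  have cs: "c1 = \<bar>B (\<sigma> 1) (\<sigma> 2)\<bar>" "c2 = \<bar>B (\<sigma> 1) (\<sigma> 3)\<bar>" "c3 = \<bar>B (\<sigma> 2) (\<sigma> 3)\<bar>"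
    using c12 c1_c2_c3_def by auto
  have P: "(c1 = u \<and> c2 = v \<and> c3 = w) \<or> (c1 = u \<and> c2 = w \<and> c3 = v) \<or> (c1 = v \<and> c2 = u \<and> c3 = w) \<or>
           (c1 = v \<and> c2 = w \<and> c3 = u) \<or> (c1 = w \<and> c2 = u \<and> c3 = v) \<or> (c1 = w \<and> c2 = v \<and> c3 = u)"
    using perm3[OF d] by (elim disjE conjE; simp only: cs all; simp)
  show ?thesis unfolding CB CC using P by (elim disjE conjE) (simp_all add: algebra_simps)
qed



lemma negm_S: "negm (S p q r) = S (-p) (-q) (-r)"
  by (rule mat_eqI) (simp_all add: negm_def S_out)

lemma ess_rot: "ess_equiv (S p q r) (S q (-r) (-p))"
proof -
  define \<sigma> :: "nat \<Rightarrow> nat" where "\<sigma> = (\<lambda>i. if i = 1 then 2 else if i = 2 then 3 else if i = 3 then 1 else i)"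
  have b: "bij_betw \<sigma> I3 I3" unfolding bij_betw_def inj_on_def I3_def \<sigma>_def by auto
  have "\<forall>i\<in>I3. \<forall>j\<in>I3. S q (-r) (-p) i j = 1 * S p q r (\<sigma> i) (\<sigma> j)"
    unfolding I3_def \<sigma>_def by simp
  then show ?thesis unfolding ess_alt using b by blast
qed

lemma ess_swap: "ess_equiv (S p q r) (S (-p) r q)"
proof -
  define \<sigma> :: "nat \<Rightarrow> nat" where "\<sigma> = (\<lambda>i. if i = 1 then 2 else if i = 2 then 1 else i)"
  have b: "bij_betw \<sigma> I3 I3" unfolding bij_betw_def inj_on_def I3_def \<sigma>_def by auto
  have "\<forall>i\<in>I3. \<forall>j\<in>I3. S (-p) r q i j = 1 * S p q r (\<sigma> i) (\<sigma> j)"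
    unfolding I3_def \<sigma>_def by simp
  then show ?thesis unfolding ess_alt using b by blast
qed

lemma cyc_rot: "ess_equiv (cyc 1 a b c) (cyc 1 b c a)"
  using ess_rot[of "-a" "-b" c] unfolding cyc_def by simp

lemma cyc_sw: "ess_equiv (cyc 1 a b c) (cyc 1 a c b)"
proof -
  have "ess_equiv (cyc 1 a b c) (S a c (-b))" using ess_swap[of "-a" "-b" c] unfolding cyc_def by simp
  moreover have "ess_equiv (S a c (-b)) (cyc 1 a c b)" using ess_neg[of "S a c (-b)"] unfolding negm_S cyc_def by simp
  ultimately show ?thesis using ess_trans by blast
qed

lemma cyc_one: "e = 1 \<or> e = -1 \<Longrightarrow> ess_equiv (cyc e a b c) (cyc 1 a b c)"
proof (elim disjE)
  assume "e = 1" then show ?thesis using ess_refl by simp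
next
  assume "e = -1" then show ?thesis using ess_neg[of "cyc (-1) a b c"] unfolding cyc_def negm_S by simp
qed

definition perms3 :: "int \<Rightarrow> int \<Rightarrow> int \<Rightarrow> (int \<times> int \<times> int) set" where
  "perms3 a b c = {(a,b,c),(a,c,b),(b,a,c),(b,c,a),(c,a,b),(c,b,a)}"

lemma cyc_perm: "(x,y,z) \<in> perms3 a b c \<Longrightarrow> ess_equiv (cyc 1 a b c) (cyc 1 x y z)"
proof -
  assume h: "(x,y,z) \<in> perms3 a b c"
  have r1: "ess_equiv (cyc 1 a b c) (cyc 1 b c a)" by (rule cyc_rot)
  have r2: "ess_equiv (cyc 1 a b c) (cyc 1 c a b)" using cyc_rot[of a b c] cyc_rot[of b c a] ess_trans by blast
  have s1: "ess_equiv (cyc 1 a b c) (cyc 1 a c b)" by (rule cyc_sw)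
  have s2: "ess_equiv (cyc 1 a b c) (cyc 1 c b a)" using s1 cyc_rot[of a c b] ess_trans by blast
  have s3: "ess_equiv (cyc 1 a b c) (cyc 1 b a c)" using s2 cyc_rot[of c b a] ess_trans by blast
  show ?thesis using h unfolding perms3_def using ess_refl r1 r2 s1 s2 s3 by auto
qed

lemma sort3: "\<exists>x y z. sort [a,b,c::int] = [z,y,x] \<and> (x,y,z) \<in> perms3 a b c"
  unfolding perms3_def
  by (cases "a \<le> b"; cases "b \<le> c"; cases "a \<le> c") auto

lemma std_cyc:
  assumes "skew3 A" "\<not> acyclic3 A"
  shows "ess_equiv A (std_form A) \<and> (\<exists>x y z. std_form A = S (-x) (-y) z)"
proof -
  obtain e a b c where e: "e = 1 \<or> e = -1" and pos: "a > 0" "b > 0" "c > 0" and A: "A = cyc e a b c"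
    using cyc_form assms by blast
  have v: "\<bar>A 1 2\<bar> = a" "\<bar>A 1 3\<bar> = c" "\<bar>A 2 3\<bar> = b" using A e pos unfolding cyc_def by (auto simp: abs_mult)
  obtain x y z where s: "sort [a,c,b] = [z,y,x]" and p: "(x,y,z) \<in> perms3 a c b" using sort3 by blast
  have p': "(x,y,z) \<in> perms3 a b c" using p unfolding perms3_def by auto
  have E: "ess_equiv A (S (-x) (-y) z)"
    using cyc_one[OF e, of a b c] cyc_perm[OF p'] A ess_trans unfolding cyc_def by auto
  have "std_form A = S (-x) (-y) z" unfolding std_form_def v s Let_def using E by simp
  then show ?thesis using E by auto
qed



definition inO :: "mat3 \<Rightarrow> mat3 \<Rightarrow> bool" where
  "inO A B \<longleftrightarrow> (\<exists>B0. mut_class A B0 \<and> ess_equiv B0 B)"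

context
  fixes A :: mat3
  assumes skA: "skew3 A" and mcA: "mutation_cyclic A"
begin

lemma inO_mut3: "inO A B \<Longrightarrow> inO A (mut 3 B)"
proof -
  assume "inO A B"
  then obtain B0 where b: "mut_class A B0" "ess_equiv B0 B" unfolding inO_def by blast
  obtain k' where "k' \<in> I3" "ess_equiv (mut k' B0) (mut 3 B)" using ess_mut[OF b(2)] by (auto simp: I3_def)
  then show ?thesis unfolding inO_def using b(1) mut_class.step by blast
qed

lemma inO_ess: "inO A B \<Longrightarrow> ess_equiv B C \<Longrightarrow> inO A C"
  unfolding inO_def using ess_trans by blast

lemma inO_nacyc: "inO A B \<Longrightarrow> \<not> acyclic3 B"
  unfolding inO_def using ess_acyc class_inv[OF _ skA mcA] by blast

lemma inO_Cabs: "inO A B \<Longrightarrow> Cabs B = Cm A"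
proof -
  assume "inO A B"
  then obtain B0 where b: "mut_class A B0" "ess_equiv B0 B" unfolding inO_def by blast
  have "skew3 B0" "Cm B0 = Cm A" using class_inv[OF b(1) skA mcA] by auto
  then show ?thesis using ess_Cabs[OF b(2)] Cabs_Cm by simp
qed

lemma fail_no: "fail_run B M \<Longrightarrow> inO A B \<Longrightarrow> False"
proof (induction rule: fail_run.induct)
  case (stop B) then show ?case using inO_nacyc by blast
next
  case (go B C M) then show ?case using inO_mut3 inO_ess by blast
qed

lemma run2_ok: "run2 B M \<Longrightarrow> inO A B \<Longrightarrow> \<exists>d e f. inO A (S (-d) (-e) f) \<and> M = out_of d e f \<and>
   e \<le> d \<and> f \<le> e \<and> 2 \<le> f \<and> e \<le> e*f - d"
proof (induction rule: run2.induct)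
  case (pass B d e f)
  have "inO A (S (-d) (-e) f)" using pass inO_mut3 inO_ess by blast
  moreover have "e \<le> e*f - d" using pass(5) by auto
  ultimately show ?case using pass by blast
next
  case (cont B d e f M) then show ?case using inO_mut3 inO_ess by blast
next
  case (fail_f2 B d e f M) then show ?case using inO_mut3 inO_ess fail_no by blast
next
  case (fail_nf B M) then show ?case using fail_no by blast
qed

lemma mout_ok:
  assumes "m_out A M"
  shows "\<exists>d e f. inO A (S (-d) (-e) f) \<and> M = out_of d e f \<and> e \<le> d \<and> f \<le> e \<and> 2 \<le> f \<and> e \<le> e*f - d"
proof -
  have nA: "\<not> acyclic3 A" using mcA mut_class.refl unfolding mutation_cyclic_def by blast
  obtain x y z where sf: "std_form A = S (-x) (-y) z" and E: "ess_equiv A (std_form A)"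
    using std_cyc[OF skA nA] by blast
  have O1: "inO A (std_form A)" unfolding inO_def using E mut_class.refl by blast
  define A1 where "A1 = std_form A"
  have A1: "A1 = S (-x) (-y) z" using sf A1_def by simp
  have O1': "inO A A1" using O1 A1_def by simp
  show ?thesis
  proof (cases "x \<ge> y \<and> y \<ge> z \<and> z \<ge> 2 \<and> y * z - x \<ge> y")
    case True
    then have "M = out_of x y z" using assms unfolding m_out_def A1_def[symmetric] A1 by (simp add: Let_def)
    moreover have "inO A (S (-x) (-y) z)" using O1' A1 by simp
    moreover have "y \<le> y * z - x" using True by simp
    ultimately show ?thesis using True by blast
  next
    case False
    then have "(if acyclic3 A1 \<or> z \<le> 2 then fail_run A1 M else run2 A1 M)"
      using assms unfolding m_out_def A1_def[symmetric] A1 by (simp add: Let_def)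
    then show ?thesis using fail_no[OF _ O1'] run2_ok[OF _ O1'] by (auto split: if_splits)
  qed
qed

end

lemma C_root:
  fixes d e f :: int
  assumes "e \<le> d" "f \<le> e" "3 \<le> f" "e \<le> e*f - d"
  shows "d^2 + e^2 + f^2 - d*e*f \<le> 0"
proof -
  have h1: "(d - e) * (e*f - d - e) \<ge> 0" using assms by simp
  have h2: "e^2 * (f - 3) \<ge> 0" using assms by simp
  have h3: "e^2 \<ge> f^2" using assms by (simp add: power_mono)
  show ?thesis using h1 h2 h3 by (simp add: power2_eq_square algebra_simps)
qed



lemma sum_filter3: "(\<Sum>i\<in>{i\<in>I3. P i}. f i) = (if P 1 then f 1 else 0) + (if P 2 then f 2 else 0) + (if P 3 then (f 3::int) else 0)"
proof -
  have "(\<Sum>i\<in>{i\<in>I3. P i}. f i) = (\<Sum>i\<in>I3. if P i then f i else 0)"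
    by (rule sum.inter_filter) (simp add: I3_def)
  then show ?thesis by (simp add: I3_def)
qed

lemma deg_lin: "X * b0 = g1 * u \<Longrightarrow> Y * b0 = g1 * v \<Longrightarrow> (-X + m*Y) * (b0::int) = g1*(m*v - u)"
proof -
  assume a: "X * b0 = g1 * u" "Y * b0 = g1 * v"
  have "(-X + m*Y) * b0 = -(X*b0) + m*(Y*b0)" by (simp add: algebra_simps)
  also have "\<dots> = g1*(m*v - u)" using a by (simp add: algebra_simps)
  finally show ?thesis .
qed

lemma deg_step:
  assumes e: "e = 1 \<or> e = -1" and pos: "a > 0" "b > 0" "c > 0" and B: "B = cyc e a b c" and k: "k \<in> I3"
    and h: "\<forall>i\<in>I3. h i * b0 = g1 * wt B i"
  shows "mut_deg k B h k * b0 = g1 * (opw B k - wt B k)"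
proof -
  have w: "wt B 1 = b" "wt B 2 = c" "wt B 3 = a" using wt_cyc[OF e pos] B by auto
  have h1: "h 1 * b0 = g1 * b" and h2: "h 2 * b0 = g1 * c" and h3: "h 3 * b0 = g1 * a"
    using h w by (auto simp: I3_def)
  have md: "mut_deg k B h k = - h k + (\<Sum>i\<in>{i\<in>I3. B i k > 0}. B i k * h i)"
    unfolding mut_deg_def by simp
  consider "k = 1" | "k = 2" | "k = 3" using I3_cases k by blast
  then show ?thesis
  proof cases
    case 1
    from e show ?thesis
    proof
      assume e1: "e = 1"
      have m: "mut_deg k B h k = - h 1 + c * h 3" unfolding md sum_filter3 using 1 e1 B pos by (simp add: cyc_def)
      show ?thesis unfolding m deg_lin[OF h1 h3] using 1 w by (simp add: opw_def algebra_simps)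
    next
      assume e1: "e = -1"
      have m: "mut_deg k B h k = - h 1 + a * h 2" unfolding md sum_filter3 using 1 e1 B pos by (simp add: cyc_def)
      show ?thesis unfolding m deg_lin[OF h1 h2] using 1 w by (simp add: opw_def algebra_simps)
    qed
  next
    case 2
    from e show ?thesis
    proof
      assume e1: "e = 1"
      have m: "mut_deg k B h k = - h 2 + a * h 1" unfolding md sum_filter3 using 2 e1 B pos by (simp add: cyc_def)
      show ?thesis unfolding m deg_lin[OF h2 h1] using 2 w by (simp add: opw_def algebra_simps)
    next
      assume e1: "e = -1"
      have m: "mut_deg k B h k = - h 2 + b * h 3" unfolding md sum_filter3 using 2 e1 B pos by (simp add: cyc_def)
      show ?thesis unfolding m deg_lin[OF h2 h3] using 2 w by (simp add: opw_def algebra_simps)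
    qed
  next
    case 3
    from e show ?thesis
    proof
      assume e1: "e = 1"
      have m: "mut_deg k B h k = - h 3 + b * h 2" unfolding md sum_filter3 using 3 e1 B pos by (simp add: cyc_def)
      show ?thesis unfolding m deg_lin[OF h3 h2] using 3 w by (simp add: opw_def algebra_simps)
    next
      assume e1: "e = -1"
      have m: "mut_deg k B h k = - h 3 + c * h 1" unfolding md sum_filter3 using 3 e1 B pos by (simp add: cyc_def)
      show ?thesis unfolding m deg_lin[OF h3 h1] using 3 w by (simp add: opw_def algebra_simps)
    qed
  qed
qed

lemma prod_pos3: "(\<And>i. i \<in> I \<Longrightarrow> (f i::real) > 0) \<Longrightarrow> (\<Prod>i\<in>I. f i ^ n i) > 0"
  by (rule prod_pos) simp

lemma clus_pos:
  assumes "\<forall>i\<in>I3. \<forall>p. pos3 p \<longrightarrow> x i p > 0" "pos3 p" "k \<in> I3"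
  shows "mut_cluster k B x k p > 0"
proof -
  have "(\<Prod>i\<in>{i\<in>I3. B i k > 0}. x i p ^ nat (B i k)) > 0"
    by (rule prod_pos) (use assms in auto)
  moreover have "(\<Prod>i\<in>{i\<in>I3. B i k < 0}. x i p ^ nat (- B i k)) > 0"
    by (rule prod_pos) (use assms in auto)
  ultimately show ?thesis unfolding mut_cluster_def using assms by simp
qed

lemma clus_invol:
  assumes sk: "skew3 B" and k: "k \<in> I3" and pos: "\<forall>i\<in>I3. \<forall>p. pos3 p \<longrightarrow> x i p > 0"
    and z: "\<forall>p. \<not> pos3 p \<longrightarrow> x k p = 0"
  shows "mut_cluster k (mut k B) (mut_cluster k B x) = x"
proof (rule ext)
  fix j
  show "mut_cluster k (mut k B) (mut_cluster k B x) j = x j"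
  proof (cases "j = k")
    case False then show ?thesis unfolding mut_cluster_def by simp
  next
    case True
    have Bkk: "B k k = 0" using sk unfolding skew3_def by (metis add.inverse_neutral neg_equal_zero)
    define x' where "x' = mut_cluster k B x"
    have mk: "mut k B i k = - B i k" if "i \<in> I3" for i using that k unfolding mut_def by simp
    have s1: "{i\<in>I3. mut k B i k > 0} = {i\<in>I3. B i k < 0}" using mk by auto
    have s2: "{i\<in>I3. mut k B i k < 0} = {i\<in>I3. B i k > 0}" using mk by auto
    have xo: "x' i = x i" if "i \<noteq> k" for i using that unfolding x'_def mut_cluster_def by simp
    show ?thesis
    proof (rule ext)
      fix p
      show "mut_cluster k (mut k B) (mut_cluster k B x) j p = x j p"
      proof (cases "pos3 p")
        case False then show ?thesis using z True unfolding mut_cluster_def by simp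
      next
        case pp: True
        define P where "P = (\<Prod>i\<in>{i\<in>I3. B i k > 0}. x i p ^ nat (B i k))"
        define N where "N = (\<Prod>i\<in>{i\<in>I3. B i k < 0}. x i p ^ nat (- B i k))"
        have P0: "P > 0" unfolding P_def by (rule prod_pos) (use pos pp in auto)
        have N0: "N > 0" unfolding N_def by (rule prod_pos) (use pos pp in auto)
        have xk: "x k p > 0" using pos pp k by auto
        have x'k: "x' k p = (P + N) / x k p" unfolding x'_def mut_cluster_def P_def N_def using pp by simp
        have P': "(\<Prod>i\<in>{i\<in>I3. mut k B i k > 0}. x' i p ^ nat (mut k B i k)) = N"
          unfolding s1 N_def
        proof (rule prod.cong)
          fix i assume "i \<in> {i\<in>I3. B i k < 0}"
          then have "i \<in> I3" "i \<noteq> k" using Bkk by auto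
          then show "x' i p ^ nat (mut k B i k) = x i p ^ nat (- B i k)" using xo mk by simp
        qed simp
        have N': "(\<Prod>i\<in>{i\<in>I3. mut k B i k < 0}. x' i p ^ nat (- mut k B i k)) = P"
          unfolding s2 P_def
        proof (rule prod.cong)
          fix i assume "i \<in> {i\<in>I3. B i k > 0}"
          then have "i \<in> I3" "i \<noteq> k" using Bkk by auto
          then show "x' i p ^ nat (- mut k B i k) = x i p ^ nat (B i k)" using xo mk by simp
        qed simp
        have "mut_cluster k (mut k B) x' k p = (N + P) / x' k p"
          unfolding mut_cluster_def using pp P' N' by simp
        also have "\<dots> = x k p" unfolding x'k using P0 N0 xk by (simp add: field_simps)
        finally show ?thesis using True unfolding x'_def by simp
      qed
    qed
  qed
qed


type_synonym seed = "(nat \<Rightarrow> cvar) \<times> mat3 \<times> (nat \<Rightarrow> int)"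

definition mseed :: "nat \<Rightarrow> seed \<Rightarrow> seed" where
  "mseed k s = (mut_cluster k (fst (snd s)) (fst s), mut k (fst (snd s)), mut_deg k (fst (snd s)) (snd (snd s)))"

locale CA =
  fixes A :: mat3 and g :: "nat \<Rightarrow> int"
  assumes skA: "skew3 A" and mcA: "mutation_cyclic A" and gnz: "\<exists>i\<in>I3. g i \<noteq> 0"
    and ker: "\<forall>i\<in>I3. (\<Sum>j\<in>I3. A i j * g j) = 0" and C0: "Cm A \<le> 0"
begin

definition "b0 = wt A 1"
definition "g1 = g 1"

lemma nacA: "\<not> acyclic3 A" using mcA mut_class.refl unfolding mutation_cyclic_def by blast

lemma b0_pos: "b0 > 0" unfolding b0_def using wt_pos[OF skA nacA] .

lemma g_rel: "(\<forall>i\<in>I3. g i * b0 = g1 * wt A i) \<and> g1 \<noteq> 0"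
proof -
  obtain e a b c where e: "e = 1 \<or> e = -1" and pos: "a > 0" "b > 0" "c > 0" and A: "A = cyc e a b c"
    using cyc_form skA nacA by blast
  have w: "wt A 1 = b" "wt A 2 = c" "wt A 3 = a" using wt_cyc[OF e pos] A by auto
  have r: "(\<Sum>j\<in>I3. A i j * g j) = A i 1 * g 1 + A i 2 * g 2 + A i 3 * g 3" for i by (simp add: I3_def)
  have k1: "A 1 1 * g 1 + A 1 2 * g 2 + A 1 3 * g 3 = 0" using ker r[of 1] by (simp add: I3_def)
  have k2: "A 2 1 * g 1 + A 2 2 * g 2 + A 2 3 * g 3 = 0" using ker r[of 2] by (simp add: I3_def)
  have k3: "A 3 1 * g 1 + A 3 2 * g 2 + A 3 3 * g 3 = 0" using ker r[of 3] by (simp add: I3_def)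
  have eqs: "a * g 2 = c * g 3 \<and> a * g 1 = b * g 3 \<and> c * g 1 = b * g 2"
    using e k1 k2 k3 unfolding A cyc_def by (elim disjE) (simp_all add: algebra_simps)
  have b0b: "b0 = b" unfolding b0_def using w by simp
  have rel: "\<forall>i\<in>I3. g i * b0 = g1 * wt A i"
    unfolding I3_def b0b g1_def using w eqs by (auto simp: algebra_simps)
  have "g1 \<noteq> 0"
  proof
    assume g0: "g1 = 0"
    then have "b * g 2 = 0" "b * g 3 = 0" using eqs g1_def by auto
    then have "g 2 = 0" "g 3 = 0" using pos by auto
    then show False using gnz g0 g1_def by (auto simp: I3_def)
  qed
  then show ?thesis using rel by blast
qed

definition inv :: "(nat \<Rightarrow> cvar) \<Rightarrow> mat3 \<Rightarrow> (nat \<Rightarrow> int) \<Rightarrow> bool" where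
  "inv x B h \<longleftrightarrow> mut_class A B \<and> (\<forall>i\<in>I3. h i * b0 = g1 * wt B i) \<and>
     (\<forall>i\<in>I3. \<forall>p. pos3 p \<longrightarrow> x i p > 0) \<and> (\<forall>i p. \<not> pos3 p \<longrightarrow> x i p = 0)"

lemma class_props: "mut_class A B \<Longrightarrow> skew3 B \<and> \<not> acyclic3 B \<and> Cm B = Cm A"
  using class_inv skA mcA by blast

lemma class_mut: assumes "mut_class A B" "k \<in> I3"
  shows "mut_class A (mut k B) \<and> wt (mut k B) k = opw B k - wt B k \<and> (\<forall>j\<in>I3. j \<noteq> k \<longrightarrow> wt (mut k B) j = wt B j)"
proof -
  have m: "mut_class A (mut k B)" using assms mut_class.step by blast
  then show ?thesis using cyc_mut_wt class_props assms m by blast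
qed

lemma reach_inv: "seed_reach A g x B h \<Longrightarrow> inv x B h"
proof (induction rule: seed_reach.induct)
  case init
  have "\<forall>i\<in>I3. \<forall>p. pos3 p \<longrightarrow> x0 i p > 0" unfolding x0_def pos3_def by auto
  moreover have "\<forall>i p. \<not> pos3 p \<longrightarrow> x0 i p = 0" unfolding x0_def by auto
  ultimately show ?case unfolding inv_def using g_rel mut_class.refl by blast
next
  case (step x B h k)
  have I: "mut_class A B" "\<forall>i\<in>I3. h i * b0 = g1 * wt B i" "\<forall>i\<in>I3. \<forall>p. pos3 p \<longrightarrow> x i p > 0"
     "\<forall>i p. \<not> pos3 p \<longrightarrow> x i p = 0" using step(3) unfolding inv_def by auto
  have cm: "mut_class A (mut k B) \<and> wt (mut k B) k = opw B k - wt B k \<and> (\<forall>j\<in>I3. j \<noteq> k \<longrightarrow> wt (mut k B) j = wt B j)"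
    using class_mut I(1) step(2) by blast
  obtain e a b c where e: "e = 1 \<or> e = -1" and pos: "a > 0" "b > 0" "c > 0" and B: "B = cyc e a b c"
    using cyc_form class_props[OF I(1)] by blast
  have hk: "mut_deg k B h k * b0 = g1 * (opw B k - wt B k)"
    using deg_step[OF e pos B step(2) I(2)] .
  have H: "\<forall>i\<in>I3. mut_deg k B h i * b0 = g1 * wt (mut k B) i"
  proof
    fix i assume i: "i \<in> I3"
    show "mut_deg k B h i * b0 = g1 * wt (mut k B) i"
    proof (cases "i = k")
      case True then show ?thesis using hk cm by simp
    next
      case False then show ?thesis using I(2) i cm unfolding mut_deg_def by simp
    qed
  qed
  have P: "\<forall>i\<in>I3. \<forall>p. pos3 p \<longrightarrow> mut_cluster k B x i p > 0"
  proof (intro ballI allI impI)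
    fix i p assume i: "i \<in> I3" and p: "pos3 p"
    show "mut_cluster k B x i p > 0"
    proof (cases "i = k")
      case True then show ?thesis using clus_pos[OF I(3) p step(2)] by simp
    next
      case False then show ?thesis using I(3) i p unfolding mut_cluster_def by simp
    qed
  qed
  have Z: "\<forall>i p. \<not> pos3 p \<longrightarrow> mut_cluster k B x i p = 0"
    using I(4) unfolding mut_cluster_def by simp
  show ?case unfolding inv_def using cm H P Z by blast
qed

definition runw :: "nat list \<Rightarrow> seed" where
  "runw ws = foldl (\<lambda>s k. mseed k s) (x0, A, g) ws"

abbreviation "Xw ws \<equiv> fst (runw ws)"
abbreviation "Bw ws \<equiv> fst (snd (runw ws))"
abbreviation "Hw ws \<equiv> snd (snd (runw ws))"

lemma runw_snoc: "runw (ws @ [k]) = mseed k (runw ws)" unfolding runw_def by simp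
lemma runw_Nil: "runw [] = (x0, A, g)" unfolding runw_def by simp

lemma Bw_snoc: "Bw (ws @ [k]) = mut k (Bw ws)" unfolding runw_snoc mseed_def by simp
lemma Xw_snoc: "Xw (ws @ [k]) = mut_cluster k (Bw ws) (Xw ws)" unfolding runw_snoc mseed_def by simp
lemma Hw_snoc: "Hw (ws @ [k]) = mut_deg k (Bw ws) (Hw ws)" unfolding runw_snoc mseed_def by simp

lemma runw_reach: "set ws \<subseteq> I3 \<Longrightarrow> seed_reach A g (Xw ws) (Bw ws) (Hw ws)"
proof (induction ws rule: rev_induct)
  case Nil then show ?case unfolding runw_Nil by (simp add: seed_reach.init)
next
  case (snoc k ws)
  then have "seed_reach A g (Xw ws) (Bw ws) (Hw ws)" "k \<in> I3" by auto
  then show ?case unfolding Bw_snoc Xw_snoc Hw_snoc by (rule seed_reach.step)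
qed

lemma reach_runw: "seed_reach A g x B h \<Longrightarrow> \<exists>ws. set ws \<subseteq> I3 \<and> runw ws = (x, B, h)"
proof (induction rule: seed_reach.induct)
  case init then show ?case using runw_Nil by (intro exI[of _ "[]"]) simp
next
  case (step x B h k)
  then obtain ws where "set ws \<subseteq> I3" "runw ws = (x, B, h)" by blast
  then show ?case using step(2) by (intro exI[of _ "ws @ [k]"]) (simp add: runw_snoc mseed_def)
qed

lemma inv_w: "set ws \<subseteq> I3 \<Longrightarrow> inv (Xw ws) (Bw ws) (Hw ws)"
  using runw_reach reach_inv by blast

lemma class_w: "set ws \<subseteq> I3 \<Longrightarrow> mut_class A (Bw ws)" using inv_w unfolding inv_def by blast

lemma invol: assumes ws: "set ws \<subseteq> I3" and k: "k \<in> I3" shows "runw (ws @ [k, k]) = runw ws"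
proof -
  have e: "ws @ [k, k] = (ws @ [k]) @ [k]" by simp
  have I: "inv (Xw ws) (Bw ws) (Hw ws)" using inv_w ws by blast
  have sk: "skew3 (Bw ws)" using I class_props unfolding inv_def by blast
  have B2: "Bw (ws @ [k, k]) = Bw ws"
    unfolding e Bw_snoc by (rule mut_invol) (use sk in \<open>unfold skew3_def; blast\<close>)
  have X2: "Xw (ws @ [k, k]) = Xw ws"
    unfolding e Xw_snoc Bw_snoc by (rule clus_invol[OF sk k]) (use I in \<open>auto simp: inv_def\<close>)
  have ws2: "set (ws @ [k, k]) \<subseteq> I3" using ws k by auto
  have I2: "inv (Xw (ws @ [k, k])) (Bw (ws @ [k, k])) (Hw (ws @ [k, k]))" using inv_w ws2 by blast
  have H2: "Hw (ws @ [k, k]) = Hw ws"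
  proof (rule ext)
    fix i show "Hw (ws @ [k, k]) i = Hw ws i"
    proof (cases "i \<in> I3")
      case True
      have "Hw (ws @ [k, k]) i * b0 = Hw ws i * b0" using I I2 B2 True unfolding inv_def by auto
      then show ?thesis using b0_pos by simp
    next
      case False
      then have "i \<noteq> k" using k by auto
      then show ?thesis unfolding e Hw_snoc mut_deg_def by simp
    qed
  qed
  show ?thesis using B2 X2 H2 by (simp add: prod_eq_iff)
qed

end


definition U :: "mat3 \<Rightarrow> int" where "U B = max (wt B 1) (max (wt B 2) (wt B 3))"
definition umax :: "mat3 \<Rightarrow> nat \<Rightarrow> bool" where "umax B k \<longleftrightarrow> (\<forall>j\<in>I3. j \<noteq> k \<longrightarrow> wt B j < wt B k)"

lemma arith_up:
  fixes x y z :: int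
  assumes "3 \<le> x" "3 \<le> y" "0 < z" "z \<le> x \<or> z \<le> y"
  shows "max x (max y z) < x*y - z"
proof -
  have a: "x*y \<ge> 3*x" using assms by (simp add: mult_left_mono mult.commute)
  have b: "x*y \<ge> 3*y" using assms by (simp add: mult_right_mono)
  have "x < x*y - z" "y < x*y - z" "z < x*y - z" using a b assms by linarith+
  then show ?thesis by simp
qed

lemma umax_of_U: "k \<in> I3 \<Longrightarrow> (\<forall>j\<in>I3. j \<noteq> k \<longrightarrow> wt M j < U M) \<Longrightarrow> umax M k"
  unfolding umax_def U_def I3_def by (auto simp: max_def split: if_splits)

lemma umax_U: "k \<in> I3 \<Longrightarrow> umax M k \<Longrightarrow> U M = wt M k"
  unfolding umax_def U_def I3_def by (auto simp: max_def)

lemma umax_unique: "umax B k \<Longrightarrow> umax B j \<Longrightarrow> j \<in> I3 \<Longrightarrow> k \<in> I3 \<Longrightarrow> j = k"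
  unfolding umax_def by force

lemma wt_le_U: "j \<in> I3 \<Longrightarrow> wt B j \<le> U B"
  unfolding U_def I3_def by auto

context CA begin

definition "M0 = U A"

lemma wt3: assumes "mut_class A B" shows "wt B 1 \<ge> 3 \<and> wt B 2 \<ge> 3 \<and> wt B 3 \<ge> 3"
proof -
  have p: "skew3 B" "\<not> acyclic3 B" "Cm B = Cm A" using class_props assms by auto
  have pos: "wt B 1 > 0" "wt B 2 > 0" "wt B 3 > 0" using wt_pos p by auto
  have C: "wt B 1 ^ 2 + wt B 2 ^ 2 + wt B 3 ^ 2 - wt B 1 * wt B 2 * wt B 3 \<le> 0"
    using p(3) C0 unfolding Cm_def by simp
  have "wt B 1 \<ge> 3" by (rule ge3[OF pos C])
  moreover have "wt B 2 \<ge> 3" by (rule ge3[OF pos(2) pos(1) pos(3)]) (use C in \<open>simp add: algebra_simps\<close>)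
  moreover have "wt B 3 \<ge> 3" by (rule ge3[OF pos(3) pos(1) pos(2)]) (use C in \<open>simp add: algebra_simps\<close>)
  ultimately show ?thesis by simp
qed

lemma U_pos: "mut_class A B \<Longrightarrow> U B > 0" using wt3[of B] unfolding U_def by auto

lemma nonup_umax:
  assumes B: "mut_class A B" and k: "k \<in> I3" and le: "U (mut k B) \<le> U B"
  shows "umax B k"
proof (rule ccontr)
  assume nu: "\<not> umax B k"
  have cm: "wt (mut k B) k = opw B k - wt B k" "\<forall>j\<in>I3. j \<noteq> k \<longrightarrow> wt (mut k B) j = wt B j"
    using class_mut[OF B k] by auto
  have w: "wt B 1 \<ge> 3" "wt B 2 \<ge> 3" "wt B 3 \<ge> 3" using wt3[OF B] by auto
  have nle: "wt (mut k B) k \<le> U (mut k B)" using wt_le_U k by blast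
  consider "k = 1" | "k = 2" | "k = 3" using I3_cases k by blast
  then show False
  proof cases
    case 1
    have "wt B 1 \<le> wt B 2 \<or> wt B 1 \<le> wt B 3" using nu 1 unfolding umax_def I3_def by auto
    then have "max (wt B 2) (max (wt B 3) (wt B 1)) < wt B 2 * wt B 3 - wt B 1"
      using arith_up w by auto
    moreover have "wt (mut k B) k = wt B 2 * wt B 3 - wt B 1" using cm 1 unfolding opw_def by simp
    ultimately show False using nle le unfolding U_def by (simp add: max_def split: if_splits)
  next
    case 2
    have "wt B 2 \<le> wt B 1 \<or> wt B 2 \<le> wt B 3" using nu 2 unfolding umax_def I3_def by auto
    then have "max (wt B 1) (max (wt B 3) (wt B 2)) < wt B 1 * wt B 3 - wt B 2"
      using arith_up w by auto
    moreover have "wt (mut k B) k = wt B 1 * wt B 3 - wt B 2" using cm 2 unfolding opw_def by simp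
    ultimately show False using nle le unfolding U_def by (simp add: max_def split: if_splits)
  next
    case 3
    have "wt B 3 \<le> wt B 1 \<or> wt B 3 \<le> wt B 2" using nu 3 unfolding umax_def I3_def by auto
    then have "max (wt B 1) (max (wt B 2) (wt B 3)) < wt B 1 * wt B 2 - wt B 3"
      using arith_up w by auto
    moreover have "wt (mut k B) k = wt B 1 * wt B 2 - wt B 3" using cm 3 unfolding opw_def by simp
    ultimately show False using nle le unfolding U_def by (simp add: max_def split: if_splits)
  qed
qed

lemma umax_after:
  assumes B: "mut_class A B" and k: "k \<in> I3"
    and h: "U B < U (mut k B) \<or> (U B \<le> U (mut k B) \<and> umax B k)"
  shows "umax (mut k B) k"
proof (rule umax_of_U[OF k], intro ballI impI)
  fix j assume j: "j \<in> I3" "j \<noteq> k"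
  have e: "wt (mut k B) j = wt B j" using class_mut[OF B k] j by auto
  from h show "wt (mut k B) j < U (mut k B)"
  proof
    assume "U B < U (mut k B)" then show ?thesis using e wt_le_U[OF j(1), of B] by simp
  next
    assume "U B \<le> U (mut k B) \<and> umax B k"
    then show ?thesis using e j wt_le_U[OF k, of B] unfolding umax_def by fastforce
  qed
qed

end


context CA begin

definition NF :: "nat list \<Rightarrow> nat list \<Rightarrow> nat list \<Rightarrow> bool" where
  "NF dd f q \<longleftrightarrow> set (dd @ f @ q) \<subseteq> I3 \<and> int (length dd) + U (Bw dd) \<le> M0 \<and>
     (f = [] \<or> (\<exists>k. f = [k] \<and> U (Bw (dd @ f)) = U (Bw dd) \<and> umax (Bw (dd @ f)) k)) \<and>
     (\<forall>n \<le> length q. int n + U (Bw (dd @ f)) \<le> U (Bw (dd @ f @ take n q))) \<and>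
     (\<forall>n < length q. umax (Bw (dd @ f @ take (Suc n) q)) (q ! n))"

lemma NF_ex: "set ws \<subseteq> I3 \<Longrightarrow> \<exists>dd f q. NF dd f q \<and> runw (dd @ f @ q) = runw ws"
proof (induction ws rule: rev_induct)
  case Nil
  have "NF [] [] []" unfolding NF_def M0_def by (simp add: runw_Nil)
  then show ?case by fastforce
next
  case (snoc k ws)
  then have k: "k \<in> I3" and ws: "set ws \<subseteq> I3" by auto
  obtain dd f q where N: "NF dd f q" and R: "runw (dd @ f @ q) = runw ws" using snoc ws by blast
  define B where "B = Bw (dd @ f @ q)"
  have S: "set (dd @ f @ q) \<subseteq> I3" using N unfolding NF_def by blast
  have cB: "mut_class A B" unfolding B_def using class_w S by blast
  have goal_red: "runw ((dd @ f @ q) @ [k]) = runw (ws @ [k])" unfolding runw_snoc R ..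
  show ?case
  proof (cases "U B < U (mut k B)")
    case up: True
    have um: "umax (mut k B) k" using umax_after[OF cB k] up by blast
    have "NF dd f (q @ [k])"
      unfolding NF_def
    proof (intro conjI)
      show "set (dd @ f @ q @ [k]) \<subseteq> I3" using S k by auto
      show "int (length dd) + U (Bw dd) \<le> M0" using N unfolding NF_def by blast
      show "f = [] \<or> (\<exists>k. f = [k] \<and> U (Bw (dd @ f)) = U (Bw dd) \<and> umax (Bw (dd @ f)) k)"
        using N unfolding NF_def by blast
      show "\<forall>n\<le>length (q @ [k]). int n + U (Bw (dd @ f)) \<le> U (Bw (dd @ f @ take n (q @ [k])))"
      proof (intro allI impI)
        fix n assume n: "n \<le> length (q @ [k])"
        show "int n + U (Bw (dd @ f)) \<le> U (Bw (dd @ f @ take n (q @ [k])))"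
        proof (cases "n \<le> length q")
          case True then show ?thesis using N unfolding NF_def by simp
        next
          case False
          then have n1: "n = Suc (length q)" using n by simp
          have "\<forall>n\<le>length q. int n + U (Bw (dd @ f)) \<le> U (Bw (dd @ f @ take n q))" using N unfolding NF_def by blast
          then have "int (length q) + U (Bw (dd @ f)) \<le> U (Bw (dd @ f @ take (length q) q))" by blast
          then have "int (length q) + U (Bw (dd @ f)) \<le> U B" unfolding B_def by simp
          moreover have "Bw (dd @ f @ take n (q @ [k])) = mut k B"
            using n1 Bw_snoc[of "dd @ f @ q" k] unfolding B_def by simp
          ultimately show ?thesis using up n1 by simp
        qed
      qed
      show "\<forall>n<length (q @ [k]). umax (Bw (dd @ f @ take (Suc n) (q @ [k]))) ((q @ [k]) ! n)"
      proof (intro allI impI)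
        fix n assume n: "n < length (q @ [k])"
        show "umax (Bw (dd @ f @ take (Suc n) (q @ [k]))) ((q @ [k]) ! n)"
        proof (cases "n < length q")
          case True then show ?thesis using N unfolding NF_def by (simp add: nth_append)
        next
          case False
          then have n1: "n = length q" using n by simp
          have "Bw (dd @ f @ take (Suc n) (q @ [k])) = mut k B"
            using n1 Bw_snoc[of "dd @ f @ q" k] unfolding B_def by simp
          then show ?thesis using um n1 by simp
        qed
      qed
    qed
    moreover have "runw (dd @ f @ q @ [k]) = runw (ws @ [k])" using goal_red by simp
    ultimately show ?thesis by blast
  next
    case nonup: False
    have uk: "umax B k" using nonup_umax[OF cB k] nonup by simp
    show ?thesis
    proof (cases "q = []")
      case False
      then obtain q0 k0 where q: "q = q0 @ [k0]" by (metis rev_exhaust)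
      have A: "\<forall>n<length q. umax (Bw (dd @ f @ take (Suc n) q)) (q ! n)" using N unfolding NF_def by blast
      have "length q0 < length q" using q by simp
      then have "umax (Bw (dd @ f @ take (Suc (length q0)) q)) (q ! length q0)" using A by blast
      then have u0: "umax B k0" unfolding B_def q by simp
      have kk: "k = k0" using umax_unique[OF uk u0] k S q by auto
      have S0: "set (dd @ f @ q0) \<subseteq> I3" using S q by auto
      have "runw ((dd @ f @ q) @ [k]) = runw ((dd @ f @ q0) @ [k, k])" using q kk by simp
      also have "\<dots> = runw (dd @ f @ q0)" by (rule invol[OF S0 k])
      finally have r: "runw (dd @ f @ q0) = runw (ws @ [k])" using goal_red by simp
      have "NF dd f q0"
        unfolding NF_def
      proof (intro conjI)
        show "set (dd @ f @ q0) \<subseteq> I3" by fact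
        show "int (length dd) + U (Bw dd) \<le> M0" using N unfolding NF_def by blast
        show "f = [] \<or> (\<exists>k. f = [k] \<and> U (Bw (dd @ f)) = U (Bw dd) \<and> umax (Bw (dd @ f)) k)"
          using N unfolding NF_def by blast
        show "\<forall>n\<le>length q0. int n + U (Bw (dd @ f)) \<le> U (Bw (dd @ f @ take n q0))"
        proof (intro allI impI)
          fix n assume n: "n \<le> length q0"
          have A2: "\<forall>n\<le>length q. int n + U (Bw (dd @ f)) \<le> U (Bw (dd @ f @ take n q))" using N unfolding NF_def by blast
          have "n \<le> length q" using n q by simp
          then have "int n + U (Bw (dd @ f)) \<le> U (Bw (dd @ f @ take n q))" using A2 by blast
          then show "int n + U (Bw (dd @ f)) \<le> U (Bw (dd @ f @ take n q0))"
            using n q by (simp add: take_append)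
        qed
        show "\<forall>n<length q0. umax (Bw (dd @ f @ take (Suc n) q0)) (q0 ! n)"
        proof (intro allI impI)
          fix n assume n: "n < length q0"
          then have "n < length q" using q by simp
          then have "umax (Bw (dd @ f @ take (Suc n) q)) (q ! n)" using A by blast
          then show "umax (Bw (dd @ f @ take (Suc n) q0)) (q0 ! n)" using n q by (simp add: take_append nth_append)
        qed
      qed
      then show ?thesis using r by blast
    next
      case qn: True
      show ?thesis
      proof (cases f)
        case (Cons k0 f')
        then have f: "f = [k0]" and u0: "umax (Bw (dd @ f)) k0" using N unfolding NF_def by auto
        have u0': "umax B k0" using u0 qn unfolding B_def by simp
        have kk: "k = k0" using umax_unique[OF uk u0'] k S f by auto
        have Sd: "set dd \<subseteq> I3" using S by auto
        have "runw ((dd @ f @ q) @ [k]) = runw (dd @ [k, k])" using qn f kk by simp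
        also have "\<dots> = runw dd" by (rule invol[OF Sd k])
        finally have r: "runw (dd @ [] @ []) = runw (ws @ [k])" using goal_red by simp
        have "NF dd [] []" unfolding NF_def using N Sd unfolding NF_def by simp
        then show ?thesis using r by blast
      next
        case Nil
        have Sd: "set (dd @ [k]) \<subseteq> I3" using S k by auto
        have BB: "B = Bw dd" unfolding B_def using Nil qn by simp
        have r: "runw (dd @ [k]) = runw (ws @ [k])" using goal_red Nil qn by simp
        have bnd: "int (length dd) + U (Bw dd) \<le> M0" using N unfolding NF_def by blast
        have Bk: "Bw (dd @ [k]) = mut k B" unfolding BB Bw_snoc ..
        show ?thesis
        proof (cases "U (mut k B) < U B")
          case True
          have "NF (dd @ [k]) [] []" unfolding NF_def using Sd bnd True Bk BB by simp
          then show ?thesis using r by (intro exI[of _ "dd @ [k]"] exI[of _ "[]"]) simp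
        next
          case False
          then have eq: "U (mut k B) = U B" using nonup by simp
          have um: "umax (mut k B) k" using umax_after[OF cB k] eq uk by simp
          have "NF dd [k] []" unfolding NF_def using Sd bnd eq Bk BB um by simp
          then show ?thesis using r by (intro exI[of _ dd] exI[of _ "[k]"] exI[of _ "[]"]) simp
        qed
      qed
    qed
  qed
qed

end


context CA begin

lemma NF_bound:
  assumes N: "NF dd f q" and i: "i \<in> I3"
  shows "\<exists>ws. set ws \<subseteq> I3 \<and> int (length ws) \<le> M0 + 1 + wt (Bw (dd @ f @ q)) i \<and> Xw ws i = Xw (dd @ f @ q) i"
proof -
  have S: "set (dd @ f @ q) \<subseteq> I3" and bd: "int (length dd) + U (Bw dd) \<le> M0"
    and fc: "f = [] \<or> (\<exists>k. f = [k] \<and> U (Bw (dd @ f)) = U (Bw dd) \<and> umax (Bw (dd @ f)) k)"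
    and qb: "\<forall>n \<le> length q. int n + U (Bw (dd @ f)) \<le> U (Bw (dd @ f @ take n q))"
    and qu: "\<forall>n < length q. umax (Bw (dd @ f @ take (Suc n) q)) (q ! n)"
    using N unfolding NF_def by blast+
  have Sd: "set dd \<subseteq> I3" using S by auto
  have Ud: "U (Bw dd) > 0" using U_pos class_w Sd by blast
  have Uf: "U (Bw (dd @ f)) = U (Bw dd)" "length f \<le> 1" using fc by auto
  have "\<forall>m \<le> length q. \<exists>ws. set ws \<subseteq> I3 \<and> int (length ws) \<le> M0 + 1 + wt (Bw (dd @ f @ take m q)) i \<and>
          Xw ws i = Xw (dd @ f @ take m q) i"
  proof (intro allI impI)
    fix m assume "m \<le> length q"
    then show "\<exists>ws. set ws \<subseteq> I3 \<and> int (length ws) \<le> M0 + 1 + wt (Bw (dd @ f @ take m q)) i \<and>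
          Xw ws i = Xw (dd @ f @ take m q) i"
    proof (induction m)
      case 0
      have cl: "mut_class A (Bw (dd @ f))" using class_w S by auto
      have "wt (Bw (dd @ f)) i > 0" using wt_pos class_props[OF cl] by blast
      then have "int (length (dd @ f)) \<le> M0 + 1 + wt (Bw (dd @ f @ take 0 q)) i"
        using bd Ud Uf by simp
      moreover have "set (dd @ f) \<subseteq> I3" using S by auto
      ultimately show ?case by (intro exI[of _ "dd @ f"]) simp
    next
      case (Suc m)
      then have m: "m < length q" by simp
      obtain ws where ws: "set ws \<subseteq> I3" "int (length ws) \<le> M0 + 1 + wt (Bw (dd @ f @ take m q)) i"
          "Xw ws i = Xw (dd @ f @ take m q) i" using Suc by auto
      have tk: "take (Suc m) q = take m q @ [q ! m]" using m by (simp add: take_Suc_conv_app_nth)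
      have Sm: "set (dd @ f @ take m q) \<subseteq> I3" using S by (auto dest: in_set_takeD)
      have qm: "q ! m \<in> I3" using S m by auto
      have cl: "mut_class A (Bw (dd @ f @ take m q))" using class_w Sm by blast
      show ?case
      proof (cases "q ! m = i")
        case True
        have um: "umax (Bw (dd @ f @ take (Suc m) q)) i" using qu m True by auto
        have Ueq: "U (Bw (dd @ f @ take (Suc m) q)) = wt (Bw (dd @ f @ take (Suc m) q)) i"
          using umax_U[OF i um] .
        have b1: "int (Suc m) + U (Bw (dd @ f)) \<le> U (Bw (dd @ f @ take (Suc m) q))" using qb Suc.prems by blast
        have len: "length (dd @ f @ take (Suc m) q) = length dd + length f + Suc m" using Suc.prems by simp
        have "int (length (dd @ f @ take (Suc m) q)) \<le> M0 + 1 + wt (Bw (dd @ f @ take (Suc m) q)) i"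
          using len bd b1 Ueq Uf Ud by linarith
        moreover have "set (dd @ f @ take (Suc m) q) \<subseteq> I3" using S by (auto dest: in_set_takeD)
        ultimately show ?thesis by blast
      next
        case False
        have "Xw (dd @ f @ take (Suc m) q) i = Xw (dd @ f @ take m q) i"
          unfolding tk using Xw_snoc[of "dd @ f @ take m q" "q ! m"] False unfolding mut_cluster_def by simp
        moreover have "wt (Bw (dd @ f @ take (Suc m) q)) i = wt (Bw (dd @ f @ take m q)) i"
          unfolding tk using Bw_snoc[of "dd @ f @ take m q" "q ! m"] class_mut[OF cl qm] i False by simp
        ultimately show ?thesis using ws by auto
      qed
    qed
  qed
  then show ?thesis by (metis order_refl take_all)
qed

lemma var_bound:
  assumes "seed_reach A g x B h" "i \<in> I3"
  shows "\<exists>ws. set ws \<subseteq> I3 \<and> int (length ws) \<le> M0 + 1 + wt B i \<and> Xw ws i = x i"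
proof -
  obtain ws where ws: "set ws \<subseteq> I3" "runw ws = (x, B, h)" using reach_runw[OF assms(1)] by blast
  obtain dd f q where N: "NF dd f q" and R: "runw (dd @ f @ q) = runw ws" using NF_ex[OF ws(1)] by blast
  show ?thesis using NF_bound[OF N assms(2)] R ws(2) by simp
qed

lemma deg_wt: "seed_reach A g x B h \<Longrightarrow> i \<in> I3 \<Longrightarrow> h i * b0 = g1 * wt B i"
  using reach_inv unfolding inv_def by blast

lemma finite_deg: "finite (cvars_deg A g d)"
proof -
  define L where "L = nat (M0 + 1 + \<bar>d\<bar> * b0)"
  define W where "W = {ws. set ws \<subseteq> I3 \<and> length ws \<le> L}"
  have fW: "finite W" unfolding W_def by (rule finite_lists_length_le) (simp add: I3_def)
  have sub: "cvars_deg A g d \<subseteq> (\<lambda>(ws, i). Xw ws i) ` (W \<times> I3)"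
  proof
    fix v assume "v \<in> cvars_deg A g d"
    then obtain x B h i where r: "seed_reach A g x B h" "i \<in> I3" "v = x i" "h i = d"
      unfolding cvars_deg_def by blast
    obtain ws where ws: "set ws \<subseteq> I3" "int (length ws) \<le> M0 + 1 + wt B i" "Xw ws i = x i"
      using var_bound[OF r(1,2)] by blast
    have e: "d * b0 = g1 * wt B i" using deg_wt[OF r(1,2)] r(4) by simp
    have g1: "g1 \<noteq> 0" using g_rel by blast
    have wpos: "wt B i \<ge> 0" using wt_pos class_props reach_inv[OF r(1)] unfolding inv_def
      by (meson less_imp_le)
    have "\<bar>d\<bar> * b0 = \<bar>g1\<bar> * wt B i" using e b0_pos wpos by (metis abs_mult abs_of_nonneg abs_of_pos)
    moreover have "\<bar>g1\<bar> * wt B i \<ge> wt B i" proof -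
      have "\<bar>g1\<bar> \<ge> 1" using g1 by linarith
      then show ?thesis using wpos by (simp add: mult_le_cancel_right1)
    qed
    ultimately have "wt B i \<le> \<bar>d\<bar> * b0" by simp
    then have "length ws \<le> L" using ws(2) unfolding L_def by linarith
    then have "(ws, i) \<in> W \<times> I3" using ws(1) r(2) unfolding W_def by simp
    then show "v \<in> (\<lambda>(ws, i). Xw ws i) ` (W \<times> I3)" using ws(3) r(3) by force
  qed
  moreover have "finite ((\<lambda>(ws, i). Xw ws i) ` (W \<times> I3))" using fW by (simp add: I3_def)
  ultimately show ?thesis using finite_subset by blast
qed

lemma not_balanced: "\<not> balanced A g"
proof
  assume bal: "balanced A g"
  have g1: "g1 \<noteq> 0" using g_rel by blast
  have "x0 1 \<in> cvars_deg A g g1"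
    unfolding cvars_deg_def g1_def using seed_reach.init by (force simp: I3_def)
  moreover have "cvars_deg A g (- g1) = {}"
  proof (rule ccontr)
    assume "cvars_deg A g (- g1) \<noteq> {}"
    then obtain x B h i where r: "seed_reach A g x B h" "i \<in> I3" "h i = - g1"
      unfolding cvars_deg_def by blast
    have e: "- g1 * b0 = g1 * wt B i" using deg_wt[OF r(1,2)] r(3) by simp
    have wpos: "wt B i > 0" using wt_pos class_props reach_inv[OF r(1)] unfolding inv_def by blast
    have "g1 * (b0 + wt B i) = 0" using e by (simp add: algebra_simps)
    then show False using g1 b0_pos wpos by simp
  qed
  moreover obtain fb where "bij_betw fb (cvars_deg A g g1) (cvars_deg A g (- g1))"
    using bal unfolding balanced_def by blast
  ultimately show False unfolding bij_betw_def by auto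
qed

end


lemma CmA_le0:
  fixes A :: mat3 and a b c :: int
  assumes skA: "skew3 A" and mcA: "mutation_cyclic A"
    and mo: "m_out A (S (-a) (-b) c) \<or> m_out A (negm (S (-a) (-b) c))" and c2: "c > 2"
  shows "Cm A \<le> 0"
proof -
  obtain M where M: "m_out A M" and M31: "M 3 1 = c \<or> M 3 1 = - c"
    using mo unfolding negm_def by auto
  obtain d e f where O: "inO A (S (-d) (-e) f)" and Mo: "M = out_of d e f"
    and ineq: "e \<le> d" "f \<le> e" "2 \<le> f" "e \<le> e*f - d"
    using mout_ok[OF skA mcA M] by blast
  have "out_of d e f 3 1 = f \<or> out_of d e f 3 1 = - f"
    unfolding out_of_def mut3_S by simp
  then have cf: "c = f" using M31 Mo c2 ineq by auto
  have "Cabs (S (-d) (-e) f) = Cm A" using inO_Cabs[OF skA mcA O] .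
  moreover have "Cabs (S (-d) (-e) f) = d^2 + e^2 + f^2 - d*e*f"
    unfolding Cabs_def using ineq by (simp add: algebra_simps)
  moreover have "d^2 + e^2 + f^2 - d*e*f \<le> 0"
    by (rule C_root) (use ineq cf c2 in auto)
  ultimately show ?thesis by simp
qed

theorem mainTheorem1:
  fixes A :: mat3 and g :: "nat \<Rightarrow> int" and a b c :: int
  assumes "skew3 A"
    and "mutation_cyclic A"
    and "\<exists>i\<in>I3. g i \<noteq> 0"
    and "\<forall>i\<in>I3. (\<Sum>j\<in>I3. A i j * g j) = 0"
    and "m_out A (S (-a) (-b) c) \<or> m_out A (negm (S (-a) (-b) c))"
    and "c > 2"
  shows "(\<forall>d. cvars_deg A g d \<noteq> {} \<longrightarrow> finite (cvars_deg A g d)) \<and> \<not> balanced A g"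
proof -
  have C: "Cm A \<le> 0" using CmA_le0[OF assms(1,2,5,6)] .
  interpret CA A g using assms(1-4) C by unfold_locales
  show ?thesis using finite_deg not_balanced by blast
qed


end
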